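(* Let $n,m\in\mathbb N$, $d:=\min\{n,m\}$, fix an integer $k\in\{1,\dots,d-1\}$ and $\theta\in(0,1)$, and set $\alpha:=k+\theta$. Then (a) $\mathcal V_k\subsetneq\mathcal V_\alpha\subsetneq\mathcal V_{k+1}$; (b) $\mathsf K_k\subsetneq\mathsf K_\alpha\subsetneq\mathsf K_{k+1}$; (c) $\mathsf{BP}_k\supsetneq\mathsf{BP}_\alpha\supsetneq\mathsf{BP}_{k+1}$.
   Context: For $\psi=\sum_{i,j}a_{ij}e_i\otimes f_j\in\mathbb C^n\otimes\mathbb C^m$, its Schmidt coefficients $s_1(\psi)\ge\dots\ge s_d(\psi)\ge0$ are the singular values of $[a_{ij}]$. For $\beta\in[1,d]$ with $k'=\lfloor\beta\rfloor$, $\theta'=\beta-k'$, $r'=\lceil\beta\rceil$, a unit vector $\psi$ is $\beta$-admissible if $s_j(\psi)=0$ for $j\ge r'+1$ and, when $\theta'>0$, $s_{k'+1}(\psi)\le\frac{\theta'}{k'}\sum_{j=1}^{k'}s_j(\psi)$; $\mathcal V_\beta$ is the set of these (for integer $\beta$ it is the set of unit vectors of Schmidt rank $\le\beta$). $\mathsf K_\beta$ is the closure of the convex cone generated by $\{\psi\psi^\ast:\psi\in\mathcal V_\beta\}$, and $\mathsf{BP}_\beta:=\{W \text{ Hermitian in } \mathbb M_n\otimes\mathbb M_m:\langle\psi,W\psi\rangle\ge0\ \forall\psi\in\mathcal V_\beta\}$. *)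

theory Defs
  imports "HOL-Analysis.Analysis"
begin

(* A vector psi in C^n (x) C^m is represented by its coefficient matrix
   a :: nat => nat => complex, psi = sum_{i<n,j<m} a i j e_i (x) f_j,
   with a i j = 0 outside {..<n} x {..<m}.
   Operators on C^n (x) C^m (elements of M_n (x) M_m) are represented as
   W :: nat*nat => nat*nat => complex, the matrix in the basis e_i (x) f_j,
   with entries zero outside the index set. *)

definition tidx :: "nat \<Rightarrow> nat \<Rightarrow> (nat \<times> nat) set" where
  "tidx n m = {..<n} \<times> {..<m}"

definition supported_vec :: "nat \<Rightarrow> nat \<Rightarrow> (nat \<Rightarrow> nat \<Rightarrow> complex) \<Rightarrow> bool" where
  "supported_vec n m a \<longleftrightarrow> (\<forall>i j. (i \<ge> n \<or> j \<ge> m) \<longrightarrow> a i j = 0)"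

definition unitary_fun :: "nat \<Rightarrow> (nat \<Rightarrow> nat \<Rightarrow> complex) \<Rightarrow> bool" where
  "unitary_fun n U \<longleftrightarrow>
     (\<forall>i<n. \<forall>j<n. (\<Sum>l<n. cnj (U l i) * U l j) = (if i = j then 1 else 0))"

definition is_svals :: "nat \<Rightarrow> nat \<Rightarrow> (nat \<Rightarrow> nat \<Rightarrow> complex) \<Rightarrow> (nat \<Rightarrow> real) \<Rightarrow> bool" where
  "is_svals n m a s \<longleftrightarrow>
     (\<forall>l. 0 \<le> s l) \<and> (\<forall>l. min n m \<le> l \<longrightarrow> s l = 0) \<and>
     (\<forall>l l'. l \<le> l' \<longrightarrow> s l' \<le> s l) \<and>
     (\<exists>U V. unitary_fun n U \<and> unitary_fun m V \<and>
        (\<forall>i<n. \<forall>j<m. a i j = (\<Sum>l<min n m. U i l * complex_of_real (s l) * cnj (V j l))))"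

(* Schmidt coefficients, 1-based: schmidt n m a j = s_j(psi) for j >= 1
   (the j-th largest singular value of [a_ij]); zero for j > min n m *)
definition schmidt :: "nat \<Rightarrow> nat \<Rightarrow> (nat \<Rightarrow> nat \<Rightarrow> complex) \<Rightarrow> nat \<Rightarrow> real" where
  "schmidt n m a j = (THE s. is_svals n m a s) (j - 1)"

definition unit_vec :: "nat \<Rightarrow> nat \<Rightarrow> (nat \<Rightarrow> nat \<Rightarrow> complex) \<Rightarrow> bool" where
  "unit_vec n m a \<longleftrightarrow> supported_vec n m a \<and> (\<Sum>i<n. \<Sum>j<m. (cmod (a i j))\<^sup>2) = 1"

definition admissible :: "nat \<Rightarrow> nat \<Rightarrow> real \<Rightarrow> (nat \<Rightarrow> nat \<Rightarrow> complex) \<Rightarrow> bool" where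
  "admissible n m \<beta> a \<longleftrightarrow>
     (let k' = nat \<lfloor>\<beta>\<rfloor>; \<theta>' = \<beta> - real k'; r' = nat \<lceil>\<beta>\<rceil> in
      unit_vec n m a \<and>
      (\<forall>j. r' + 1 \<le> j \<longrightarrow> schmidt n m a j = 0) \<and>
      (\<theta>' > 0 \<longrightarrow> schmidt n m a (k' + 1) \<le> \<theta>' / real k' * (\<Sum>j=1..k'. schmidt n m a j)))"

definition Vset :: "nat \<Rightarrow> nat \<Rightarrow> real \<Rightarrow> (nat \<Rightarrow> nat \<Rightarrow> complex) set" where
  "Vset n m \<beta> = {a. admissible n m \<beta> a}"

definition rank1_op :: "(nat \<Rightarrow> nat \<Rightarrow> complex) \<Rightarrow> (nat \<times> nat) \<Rightarrow> (nat \<times> nat) \<Rightarrow> complex" where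
  "rank1_op a = (\<lambda>(i, j) (i', j'). a i j * cnj (a i' j'))"

definition cvx_cone_gen ::
  "((nat \<times> nat) \<Rightarrow> (nat \<times> nat) \<Rightarrow> complex) set \<Rightarrow> ((nat \<times> nat) \<Rightarrow> (nat \<times> nat) \<Rightarrow> complex) set" where
  "cvx_cone_gen S = {X. \<exists>(N::nat) c v. (\<forall>i<N. 0 \<le> c i \<and> v i \<in> S) \<and>
                       X = (\<lambda>x y. \<Sum>i<N. complex_of_real (c i) * v i x y)}"

(* K_beta: closure (entrywise / product topology) of the convex cone generated by psi psi^* *)
definition Kset :: "nat \<Rightarrow> nat \<Rightarrow> real \<Rightarrow> ((nat \<times> nat) \<Rightarrow> (nat \<times> nat) \<Rightarrow> complex) set" where
  "Kset n m \<beta> = closure (cvx_cone_gen (rank1_op ` Vset n m \<beta>))"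

definition hermitian_op :: "nat \<Rightarrow> nat \<Rightarrow> ((nat \<times> nat) \<Rightarrow> (nat \<times> nat) \<Rightarrow> complex) \<Rightarrow> bool" where
  "hermitian_op n m W \<longleftrightarrow>
     (\<forall>x y. (x \<notin> tidx n m \<or> y \<notin> tidx n m) \<longrightarrow> W x y = 0) \<and>
     (\<forall>x\<in>tidx n m. \<forall>y\<in>tidx n m. W x y = cnj (W y x))"

definition qform :: "nat \<Rightarrow> nat \<Rightarrow> ((nat \<times> nat) \<Rightarrow> (nat \<times> nat) \<Rightarrow> complex) \<Rightarrow> (nat \<Rightarrow> nat \<Rightarrow> complex) \<Rightarrow> complex" where
  "qform n m W a = (\<Sum>x\<in>tidx n m. \<Sum>y\<in>tidx n m. cnj (case_prod a x) * W x y * case_prod a y)"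

definition BPset :: "nat \<Rightarrow> nat \<Rightarrow> real \<Rightarrow> ((nat \<times> nat) \<Rightarrow> (nat \<times> nat) \<Rightarrow> complex) set" where
  "BPset n m \<beta> = {W. hermitian_op n m W \<and> (\<forall>a\<in>Vset n m \<beta>. 0 \<le> Re (qform n m W a))}"

end

theory Submission
  imports Defs
begin

definition ipI :: "nat set \<Rightarrow> (nat \<Rightarrow> complex) \<Rightarrow> (nat \<Rightarrow> complex) \<Rightarrow> complex" where
  "ipI I x y = (\<Sum>i\<in>I. cnj (x i) * y i)"

lemma cnj_mult_self: "cnj z * z = complex_of_real ((cmod z)^2)"
  using complex_norm_square[of z] by (simp add: mult.commute)

lemma ipI_self: "ipI I x x = complex_of_real (\<Sum>i\<in>I. (cmod (x i))^2)"
  by (simp add: ipI_def cnj_mult_self)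

lemma ipI_cnj: "cnj (ipI I x y) = ipI I y x"
  by (simp add: ipI_def mult.commute)

lemma ipI_sum_right: "ipI I x (\<lambda>i. \<Sum>l\<in>L. c l * y l i) = (\<Sum>l\<in>L. c l * ipI I x (y l))"
  unfolding ipI_def by (simp add: sum_distrib_left mult_ac) (rule sum.swap)

lemma ipI_sub_right: "ipI I x (\<lambda>i. y i - z i) = ipI I x y - ipI I x z"
  unfolding ipI_def by (simp add: right_diff_distrib sum_subtractf)

lemma ipI_scale_right: "ipI I x (\<lambda>i. c * y i) = c * ipI I x y"
  unfolding ipI_def by (simp add: sum_distrib_left mult_ac)

lemma ipI_sum_left: "ipI I (\<lambda>i. \<Sum>l\<in>L. c l * y l i) x = (\<Sum>l\<in>L. cnj (c l) * ipI I (y l) x)"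
proof -
  have "ipI I (\<lambda>i. \<Sum>l\<in>L. c l * y l i) x = cnj (ipI I x (\<lambda>i. \<Sum>l\<in>L. c l * y l i))"
    by (simp add: ipI_cnj)
  also have "\<dots> = (\<Sum>l\<in>L. cnj (c l) * ipI I (y l) x)"
    by (simp add: ipI_sum_right ipI_cnj)
  finally show ?thesis .
qed

lemma ipI_sub_left: "ipI I (\<lambda>i. y i - z i) x = ipI I y x - ipI I z x"
  unfolding ipI_def by (simp add: left_diff_distrib sum_subtractf)

lemma ipI_scale_left: "ipI I (\<lambda>i. c * y i) x = cnj c * ipI I y x"
  unfolding ipI_def by (simp add: sum_distrib_left mult_ac)

lemma sum_delta_mult1: "(\<Sum>l'<(k::nat). f l' * (if l = l' then 1 else 0)) = (if l < k then f l else (0::'a::comm_ring_1))"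
  by (induct k) (auto simp: less_Suc_eq)

lemma sum_delta_mult2: "(\<Sum>l'<(k::nat). f l' * (if l' = l then 1 else 0)) = (if l < k then f l else (0::'a::comm_ring_1))"
  by (induct k) (auto simp: less_Suc_eq)

definition ortho :: "nat set \<Rightarrow> nat \<Rightarrow> (nat \<Rightarrow> nat \<Rightarrow> complex) \<Rightarrow> bool" where
  "ortho I k u \<longleftrightarrow> (\<forall>l<k. \<forall>l'<k. ipI I (u l) (u l') = (if l = l' then 1 else 0))"

definition res :: "nat set \<Rightarrow> nat \<Rightarrow> (nat \<Rightarrow> nat \<Rightarrow> complex) \<Rightarrow> (nat \<Rightarrow> complex) \<Rightarrow> nat \<Rightarrow> complex" where
  "res I k u x = (\<lambda>i. x i - (\<Sum>l<k. ipI I (u l) x * u l i))"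

lemma res_orth:
  assumes "ortho I k u" "l < k"
  shows "ipI I (u l) (res I k u x) = 0"
proof -
  have "ipI I (u l) (res I k u x) = ipI I (u l) x - (\<Sum>l'<k. ipI I (u l') x * ipI I (u l) (u l'))"
    unfolding res_def by (simp add: ipI_sub_right ipI_sum_right)
  also have "(\<Sum>l'<k. ipI I (u l') x * ipI I (u l) (u l')) = (\<Sum>l'<k. ipI I (u l') x * (if l = l' then 1 else 0))"
    using assms unfolding ortho_def by (intro sum.cong refl) auto
  also have "\<dots> = ipI I (u l) x" using assms(2) by (simp add: sum_delta_mult1)
  finally show ?thesis by simp
qed

lemma bessel_c:
  assumes "ortho I k u"
  shows "ipI I (res I k u x) (res I k u x) = ipI I x x - (\<Sum>l<k. cnj (ipI I (u l) x) * ipI I (u l) x)"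
proof -
  let ?r = "res I k u x"
  have "ipI I ?r ?r = ipI I ?r x - (\<Sum>l<k. ipI I (u l) x * ipI I ?r (u l))"
    by (subst (2) res_def) (simp add: ipI_sub_right ipI_sum_right)
  also have "(\<Sum>l<k. ipI I (u l) x * ipI I ?r (u l)) = 0"
  proof (rule sum.neutral, rule ballI)
    fix l assume "l \<in> {..<k}"
    then have "ipI I ?r (u l) = cnj (ipI I (u l) ?r)" by (simp add: ipI_cnj)
    also have "\<dots> = 0" using res_orth[OF assms] \<open>l \<in> {..<k}\<close> by simp
    finally show "ipI I (u l) x * ipI I ?r (u l) = 0" by simp
  qed
  also have "ipI I ?r x = ipI I x x - (\<Sum>l<k. cnj (ipI I (u l) x) * ipI I (u l) x)"
    by (subst res_def) (simp add: ipI_sub_left ipI_sum_left)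
  finally show ?thesis by simp
qed

lemma bessel_r:
  assumes "ortho I k u"
  shows "(\<Sum>i\<in>I. (cmod (res I k u x i))^2) = (\<Sum>i\<in>I. (cmod (x i))^2) - (\<Sum>l<k. (cmod (ipI I (u l) x))^2)"
proof -
  have "complex_of_real (\<Sum>i\<in>I. (cmod (res I k u x i))^2) =
        complex_of_real ((\<Sum>i\<in>I. (cmod (x i))^2) - (\<Sum>l<k. (cmod (ipI I (u l) x))^2))"
    using bessel_c[OF assms, of x] by (simp add: ipI_self cnj_mult_self)
  then show ?thesis using of_real_eq_iff by blast
qed

definition ev :: "nat \<Rightarrow> nat \<Rightarrow> complex" where
  "ev i = (\<lambda>j. if j = i then 1 else 0)"

lemma ipI_ev_right: "finite I \<Longrightarrow> i \<in> I \<Longrightarrow> ipI I x (ev i) = cnj (x i)"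
  unfolding ipI_def ev_def by (simp add: if_distrib cong: if_cong)

lemma sumsq_ev: "finite I \<Longrightarrow> i \<in> I \<Longrightarrow> (\<Sum>j\<in>I. (cmod (ev i j))^2) = 1"
proof -
  assume "finite I" "i \<in> I"
  have "(\<Sum>j\<in>I. (cmod (ev i j))^2) = (\<Sum>j\<in>I. if j = i then 1 else 0)"
    by (rule sum.cong) (auto simp: ev_def)
  then show ?thesis using \<open>finite I\<close> \<open>i \<in> I\<close> by simp
qed

lemma ortho_unit: "ortho I k u \<Longrightarrow> l < k \<Longrightarrow> (\<Sum>i\<in>I. (cmod (u l i))^2) = 1"
  unfolding ortho_def using ipI_self[of I "u l"] by (metis of_real_eq_1_iff)

lemma row_le1:
  assumes "finite I" "ortho I k u" "i \<in> I"
  shows "(\<Sum>l<k. (cmod (u l i))^2) \<le> 1"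
proof -
  have "0 \<le> (\<Sum>j\<in>I. (cmod (res I k u (ev i) j))^2)" by (intro sum_nonneg) simp
  moreover have e1: "(\<Sum>l<k. (cmod (ipI I (u l) (ev i)))^2) = (\<Sum>l<k. (cmod (u l i))^2)"
    using assms(1,3) by (simp add: ipI_ev_right)
  ultimately show ?thesis using bessel_r[OF assms(2), of "ev i"] sumsq_ev[OF assms(1,3)] by linarith
qed

lemma ortho_count:
  assumes "finite I" "ortho I k u"
  shows "k \<le> card I"
proof -
  have "real k = (\<Sum>l<k. \<Sum>i\<in>I. (cmod (u l i))^2)"
    using ortho_unit[OF assms(2)] by simp
  also have "\<dots> = (\<Sum>i\<in>I. \<Sum>l<k. (cmod (u l i))^2)" by (rule sum.swap)
  also have "\<dots> \<le> (\<Sum>i\<in>I. 1)" by (intro sum_mono row_le1[OF assms]) 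
  finally show ?thesis by simp
qed

lemma normalize_vec:
  assumes "(\<Sum>i\<in>I. (cmod (r i))^2) > 0"
  shows "\<exists>x. ipI I x x = 1 \<and> (\<forall>y. ipI I y r = 0 \<longrightarrow> ipI I y x = 0)"
proof -
  define s where "s = (\<Sum>i\<in>I. (cmod (r i))^2)"
  define c where "c = 1 / sqrt s"
  define x where "x = (\<lambda>j. complex_of_real c * r j)"
  have "ipI I x x = cnj (complex_of_real c) * (complex_of_real c * ipI I r r)"
    unfolding x_def by (simp only: ipI_scale_left ipI_scale_right)
  also have "\<dots> = complex_of_real (c * c * s)" by (simp add: ipI_self s_def)
  also have "c * c * s = 1" using assms unfolding c_def s_def[symmetric]
    by (simp add: field_simps)
  finally have "ipI I x x = 1" by simp
  moreover have "\<forall>y. ipI I y r = 0 \<longrightarrow> ipI I y x = 0"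
    unfolding x_def by (simp add: ipI_scale_right)
  ultimately show ?thesis by blast
qed

lemma ortho_snoc:
  assumes "ortho I k u" "ipI I x x = 1" "\<forall>l<k. ipI I (u l) x = 0"
  shows "ortho I (Suc k) (u(k := x))"
  unfolding ortho_def
proof (intro allI impI)
  fix l l' assume l: "l < Suc k" and l': "l' < Suc k"
  have x2: "ipI I x (u l) = 0" if "l < k" for l
    using assms(3) that ipI_cnj[of I "u l" x] by (metis complex_cnj_zero)
  show "ipI I ((u(k := x)) l) ((u(k := x)) l') = (if l = l' then 1 else 0)"
    using l l' assms x2 unfolding ortho_def by (auto simp: less_Suc_eq)
qed

lemma ortho_ext:
  assumes "finite I" "ortho I k u" "k < card I"
  shows "\<exists>x. ipI I x x = 1 \<and> (\<forall>l<k. ipI I (u l) x = 0)"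
proof -
  have "\<exists>i\<in>I. (\<Sum>l<k. (cmod (u l i))^2) < 1"
  proof (rule ccontr)
    assume neg: "\<not> ?thesis"
    have "\<forall>i\<in>I. (\<Sum>l<k. (cmod (u l i))^2) = 1"
    proof
      fix i assume i: "i \<in> I"
      with neg have "1 \<le> (\<Sum>l<k. (cmod (u l i))^2)" by (simp add: not_less)
      moreover have "(\<Sum>l<k. (cmod (u l i))^2) \<le> 1" by (rule row_le1[OF assms(1,2) i])
      ultimately show "(\<Sum>l<k. (cmod (u l i))^2) = 1" by linarith
    qed
    then have "(\<Sum>i\<in>I. \<Sum>l<k. (cmod (u l i))^2) = card I" by simp
    also have "(\<Sum>i\<in>I. \<Sum>l<k. (cmod (u l i))^2) = (\<Sum>l<k. \<Sum>i\<in>I. (cmod (u l i))^2)"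
      by (rule sum.swap)
    also have "\<dots> = k" using ortho_unit[OF assms(2)] by simp
    finally show False using assms(3) by simp
  qed
  then obtain i where i: "i \<in> I" "(\<Sum>l<k. (cmod (u l i))^2) < 1" by blast
  let ?r = "res I k u (ev i)"
  have e1: "(\<Sum>l<k. (cmod (ipI I (u l) (ev i)))^2) = (\<Sum>l<k. (cmod (u l i))^2)"
    using assms(1) i(1) by (simp add: ipI_ev_right)
  have pos: "(\<Sum>j\<in>I. (cmod (?r j))^2) > 0"
    using bessel_r[OF assms(2), of "ev i"] sumsq_ev[OF assms(1) i(1)] e1 i(2) by linarith
  from normalize_vec[OF pos] obtain x where x: "ipI I x x = 1" "\<forall>y. ipI I y ?r = 0 \<longrightarrow> ipI I y x = 0"
    by blast
  show ?thesis
    using x res_orth[OF assms(2)] by blast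
qed

lemma ortho_complete:
  assumes "finite I" "ortho I k u" "card I \<le> k" "i \<in> I"
  shows "x i = (\<Sum>l<k. ipI I (u l) x * u l i)"
proof -
  let ?r = "res I k u x"
  have "(\<Sum>j\<in>I. (cmod (?r j))^2) = 0"
  proof (rule ccontr)
    assume "\<not> ?thesis"
    moreover have "0 \<le> (\<Sum>j\<in>I. (cmod (?r j))^2)" by (intro sum_nonneg) simp
    ultimately have pos: "(\<Sum>j\<in>I. (cmod (?r j))^2) > 0" by linarith
    from normalize_vec[OF pos] obtain y where y: "ipI I y y = 1" "\<forall>z. ipI I z ?r = 0 \<longrightarrow> ipI I z y = 0"
      by blast
    have "\<forall>l<k. ipI I (u l) y = 0" using y(2) res_orth[OF assms(2)] by blast
    note y = y(1) this
    from ortho_count[OF assms(1) ortho_snoc[OF assms(2) y]] assms(3) show False by simp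
  qed
  then have "\<forall>j\<in>I. (cmod (?r j))^2 = 0"
    using sum_nonneg_eq_0_iff[OF assms(1), of "\<lambda>j. (cmod (?r j))^2"] by simp
  then have "?r i = 0" using assms(4) by simp
  then show ?thesis unfolding res_def by simp
qed

lemma ortho_extend_full:
  assumes "finite I" "ortho I k u" "k \<le> card I"
  shows "\<exists>u'. ortho I (card I) u' \<and> (\<forall>l<k. u' l = u l)"
  using assms
proof (induction "card I - k" arbitrary: k u)
  case 0
  then have "k = card I" by simp
  then show ?case using 0 by auto
next
  case (Suc d)
  then have "k < card I" by simp
  from ortho_ext[OF Suc.prems(1,2) this] obtain x where x: "ipI I x x = 1" "\<forall>l<k. ipI I (u l) x = 0" by blast
  have o: "ortho I (Suc k) (u(k := x))" by (rule ortho_snoc[OF Suc.prems(2) x])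
  have "d = card I - Suc k" using Suc.hyps by simp
  from Suc.hyps(1)[OF this Suc.prems(1) o] \<open>k < card I\<close>
  obtain u' where "ortho I (card I) u'" "\<forall>l<Suc k. u' l = (u(k := x)) l" by auto
  then show ?case by (intro exI[of _ u']) auto
qed

definition av :: "nat \<Rightarrow> (nat \<Rightarrow> nat \<Rightarrow> complex) \<Rightarrow> (nat \<Rightarrow> complex) \<Rightarrow> nat \<Rightarrow> complex" where
  "av m a x = (\<lambda>i. \<Sum>j<m. a i j * x j)"

definition Qf :: "nat \<Rightarrow> nat \<Rightarrow> (nat \<Rightarrow> nat \<Rightarrow> complex) \<Rightarrow> (nat \<Rightarrow> complex) \<Rightarrow> real" where
  "Qf n m a x = (\<Sum>i<n. (cmod (av m a x i))^2)"

definition nsq :: "nat \<Rightarrow> (nat \<Rightarrow> complex) \<Rightarrow> real" where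
  "nsq m x = (\<Sum>i<m. (cmod (x i))^2)"

definition rst :: "nat \<Rightarrow> (nat \<Rightarrow> complex) \<Rightarrow> nat \<Rightarrow> complex" where
  "rst m x = (\<lambda>i. if i < m then x i else 0)"

lemma ipI_nsq: "ipI {..<m} x x = complex_of_real (nsq m x)"
  by (simp add: ipI_self nsq_def)

lemma Qf_ipI: "complex_of_real (Qf n m a x) = ipI {..<n} (av m a x) (av m a x)"
  by (simp add: ipI_self Qf_def)

lemma nsq_nonneg: "0 \<le> nsq m x"
  unfolding nsq_def by (intro sum_nonneg) simp

lemma Qf_nonneg: "0 \<le> Qf n m a x"
  unfolding Qf_def by (intro sum_nonneg) simp

lemma av_rst: "av m a (rst m x) = av m a x"
  unfolding av_def rst_def by (intro ext sum.cong) auto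

lemma Qf_rst: "Qf n m a (rst m x) = Qf n m a x"
  unfolding Qf_def by (simp add: av_rst)

lemma nsq_rst: "nsq m (rst m x) = nsq m x"
  unfolding nsq_def rst_def by (intro sum.cong) auto

lemma ipI_rst: "ipI {..<m} y (rst m x) = ipI {..<m} y x"
  unfolding ipI_def rst_def by (intro sum.cong) auto

lemma av_scale: "av m a (\<lambda>j. c * x j) = (\<lambda>i. c * av m a x i)"
  unfolding av_def by (simp add: sum_distrib_left mult_ac)

lemma av_lin: "av m a (\<lambda>j. x j + c * y j) = (\<lambda>i. av m a x i + c * av m a y i)"
  unfolding av_def by (simp add: sum_distrib_left sum.distrib algebra_simps)

lemma Qf_scale: "Qf n m a (\<lambda>j. c * x j) = (cmod c)^2 * Qf n m a x"
  unfolding Qf_def by (simp add: av_scale norm_mult power_mult_distrib sum_distrib_left)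

lemma nsq_scale: "nsq m (\<lambda>j. c * x j) = (cmod c)^2 * nsq m x"
  unfolding nsq_def by (simp add: norm_mult power_mult_distrib sum_distrib_left)

lemma nsq_zero_Qf:
  assumes "nsq m x = 0" shows "Qf n m a x = 0"
proof -
  have "\<forall>j\<in>{..<m}. (cmod (x j))^2 = 0"
    using assms sum_nonneg_eq_0_iff[of "{..<m}" "\<lambda>j. (cmod (x j))^2"] unfolding nsq_def by simp
  then have "\<And>i. av m a x i = 0" unfolding av_def by (intro sum.neutral) auto
  then show ?thesis unfolding Qf_def by simp
qed

lemma ipI_expand:
  "ipI I (\<lambda>i. x i + t * y i) (\<lambda>i. x i + t * y i) =
   ipI I x x + t * ipI I x y + cnj t * ipI I y x + cnj t * t * ipI I y y"
  unfolding ipI_def by (simp add: algebra_simps sum.distrib sum_distrib_left)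

lemma ipI_lin_right: "ipI I z (\<lambda>i. x i + t * y i) = ipI I z x + t * ipI I z y"
  unfolding ipI_def by (simp add: algebra_simps sum.distrib sum_distrib_left)

lemma cont_nsq: "continuous_on UNIV (nsq m)"
  unfolding nsq_def by (intro continuous_intros) simp

lemma cont_Qf: "continuous_on UNIV (Qf n m a)"
  unfolding Qf_def av_def by (intro continuous_intros) simp

lemma cont_orthsum: "continuous_on UNIV (\<lambda>z. \<Sum>l<k. (cmod (ipI {..<m} (v l) z))^2)"
  unfolding ipI_def by (intro continuous_intros) simp

lemma compact_box: "compact {z::nat \<Rightarrow> complex. \<forall>i. z i \<in> (if i < m then cball 0 1 else {0})}"
proof -
  have "compactin (product_topology (\<lambda>i. euclidean) UNIV) (Pi\<^sub>E UNIV (\<lambda>i::nat. if i < m then cball (0::complex) 1 else {0}))"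
    by (subst compactin_PiE) auto
  moreover have "Pi\<^sub>E UNIV (\<lambda>i::nat. if i < m then cball (0::complex) 1 else {0}) = {z::nat \<Rightarrow> complex. \<forall>i. z i \<in> (if i < m then cball 0 1 else {0})}"
    by (auto simp: PiE_def Pi_def)
  ultimately show ?thesis by (simp add: euclidean_product_topology)
qed

lemma max_step:
  assumes o: "ortho {..<m} k v" and km: "k < m"
  shows "\<exists>z. nsq m z = 1 \<and> (\<forall>l<k. ipI {..<m} (v l) z = 0) \<and>
         (\<forall>y. (\<forall>l<k. ipI {..<m} (v l) y = 0) \<longrightarrow> Qf n m a y \<le> Qf n m a z * nsq m y)"
proof -
  define B where "B = {z::nat \<Rightarrow> complex. \<forall>i. z i \<in> (if i < m then cball 0 1 else {0})}"
  define S where "S = B \<inter> {z. nsq m z = 1} \<inter> {z. (\<Sum>l<k. (cmod (ipI {..<m} (v l) z))^2) = 0}"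
  have orth_iff: "(\<Sum>l<k. (cmod (ipI {..<m} (v l) z))^2) = 0 \<longleftrightarrow> (\<forall>l<k. ipI {..<m} (v l) z = 0)" for z
    using sum_nonneg_eq_0_iff[of "{..<k}" "\<lambda>l. (cmod (ipI {..<m} (v l) z))^2"] by auto
  have cS: "compact S" unfolding S_def
    by (intro compact_Int_closed compact_box[of m, folded B_def] closed_Collect_eq cont_nsq cont_orthsum
        continuous_on_const)
  have box: "rst m x \<in> B" if "nsq m x = 1" for x
  proof -
    have "cmod (x i) \<le> 1" if "i < m" for i
    proof -
      have "(cmod (x i))^2 \<le> nsq m x" unfolding nsq_def
        by (rule member_le_sum) (use that in auto)
      then have "(cmod (x i))^2 \<le> 1^2" using \<open>nsq m x = 1\<close> by simp
      then show ?thesis by (rule power2_le_imp_le) simp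
    qed
    then show ?thesis unfolding B_def rst_def by auto
  qed
  have ne: "S \<noteq> {}"
  proof -
    from ortho_ext[of "{..<m}" k v] o km obtain x where x: "ipI {..<m} x x = 1" "\<forall>l<k. ipI {..<m} (v l) x = 0"
      by auto
    have "nsq m x = 1" using x(1) by (simp add: ipI_nsq)
    then have "rst m x \<in> S" unfolding S_def using box x(2) orth_iff by (simp add: nsq_rst ipI_rst)
    then show ?thesis by blast
  qed
  have "continuous_on S (Qf n m a)" by (rule continuous_on_subset[OF cont_Qf]) simp
  from continuous_attains_sup[OF cS ne this] obtain z where z: "z \<in> S" "\<forall>y\<in>S. Qf n m a y \<le> Qf n m a z"
    by blast
  have zn: "nsq m z = 1" and zo: "\<forall>l<k. ipI {..<m} (v l) z = 0" using z(1) orth_iff unfolding S_def by auto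
  have "Qf n m a y \<le> Qf n m a z * nsq m y" if yo: "\<forall>l<k. ipI {..<m} (v l) y = 0" for y
  proof (cases "nsq m y = 0")
    case True then show ?thesis using nsq_zero_Qf by simp
  next
    case False
    then have pos: "nsq m y > 0" using nsq_nonneg[of m y] by simp
    define c where "c = 1 / sqrt (nsq m y)"
    have "(cmod (complex_of_real c))^2 = c^2" by (simp only: norm_of_real power2_abs)
    also have "c^2 = 1 / nsq m y" unfolding c_def using pos
      by (simp add: power_divide)
    finally have c2: "(cmod (complex_of_real c))^2 = 1 / nsq m y" .
    define y' where "y' = rst m (\<lambda>j. complex_of_real c * y j)"
    have "nsq m y' = 1" unfolding y'_def nsq_rst nsq_scale c2 using pos by simp
    moreover have "\<forall>l<k. ipI {..<m} (v l) y' = 0" unfolding y'_def ipI_rst using yo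
      by (simp add: ipI_scale_right)
    ultimately have "y' \<in> S" unfolding S_def using box orth_iff
      by (simp add: y'_def nsq_rst ipI_rst)
    then have "Qf n m a y' \<le> Qf n m a z" using z(2) by blast
    moreover have "Qf n m a y' = Qf n m a y / nsq m y" unfolding y'_def Qf_rst Qf_scale c2 by simp
    ultimately show ?thesis using pos by (simp add: divide_le_eq)
  qed
  then show ?thesis using zn zo by blast
qed

definition maxprop :: "nat \<Rightarrow> nat \<Rightarrow> (nat \<Rightarrow> nat \<Rightarrow> complex) \<Rightarrow> (nat \<Rightarrow> nat \<Rightarrow> complex) \<Rightarrow> nat \<Rightarrow> bool" where
  "maxprop n m a v l \<longleftrightarrow> (\<forall>y. (\<forall>l'<l. ipI {..<m} (v l') y = 0) \<longrightarrow> Qf n m a y \<le> Qf n m a (v l) * nsq m y)"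

lemma exists_vs:
  assumes "k \<le> m"
  shows "\<exists>v. ortho {..<m} k v \<and> (\<forall>l<k. maxprop n m a v l)"
  using assms
proof (induction k)
  case 0 then show ?case by (auto simp: ortho_def)
next
  case (Suc k)
  then obtain v where v: "ortho {..<m} k v" "\<forall>l<k. maxprop n m a v l" by auto
  from max_step[OF v(1), of n a] Suc.prems obtain z where
    z: "nsq m z = 1" "\<forall>l<k. ipI {..<m} (v l) z = 0"
       "\<forall>y. (\<forall>l<k. ipI {..<m} (v l) y = 0) \<longrightarrow> Qf n m a y \<le> Qf n m a z * nsq m y" by auto
  have o: "ortho {..<m} (Suc k) (v(k := z))"
    by (rule ortho_snoc[OF v(1)]) (use z in \<open>auto simp: ipI_nsq\<close>)
  have "maxprop n m a (v(k := z)) l" if "l < Suc k" for l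
  proof (cases "l = k")
    case True then show ?thesis using z(3) unfolding maxprop_def by auto
  next
    case False
    then have "l < k" using that by simp
    then show ?thesis using v(2) unfolding maxprop_def by auto
  qed
  then show ?case using o by blast
qed

lemma maxprop_decr:
  assumes o: "ortho {..<m} k v" and mp: "maxprop n m a v l" and ll: "l \<le> l'" "l' < k"
  shows "Qf n m a (v l') \<le> Qf n m a (v l)"
proof -
  have "\<forall>l''<l. ipI {..<m} (v l'') (v l') = 0" using o ll unfolding ortho_def by auto
  then have "Qf n m a (v l') \<le> Qf n m a (v l) * nsq m (v l')" using mp unfolding maxprop_def by blast
  moreover have "nsq m (v l') = 1" using o ll unfolding ortho_def by (metis ipI_nsq of_real_eq_1_iff)
  ultimately show ?thesis by simp
qed

lemma cnj_sq_real1: "cnj (complex_of_real e * cnj c) * (complex_of_real e * cnj c) = complex_of_real (e * e * (cmod c)^2)"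
  by (simp only: of_real_mult complex_norm_square) (simp add: mult_ac)

lemma cnj_sq_real2: "complex_of_real e * cnj c * c = complex_of_real (e * (cmod c)^2)"
  by (simp only: of_real_mult complex_norm_square) (simp add: mult_ac)

lemma img_orth:
  assumes o: "ortho {..<m} k v" and mp: "maxprop n m a v j" and jl: "j < l" "l < k"
  shows "ipI {..<n} (av m a (v j)) (av m a (v l)) = 0"
proof -
  define A where "A = av m a (v j)"
  define B where "B = av m a (v l)"
  define c where "c = ipI {..<n} A B"
  define lam where "lam = Qf n m a (v j)"
  define mu where "mu = Qf n m a (v l)"
  define K where "K = (cmod c)^2"
  have K0: "K \<ge> 0" unfolding K_def by simp
  have ojj: "ipI {..<m} (v j) (v j) = 1" and oll: "ipI {..<m} (v l) (v l) = 1"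
    and ojl: "ipI {..<m} (v j) (v l) = 0" and olj: "ipI {..<m} (v l) (v j) = 0"
    using o jl unfolding ortho_def by auto
  have key: "2 * e * K \<le> e * e * K * (lam - mu)" if e: "e > 0" for e
  proof -
    define t where "t = complex_of_real e * cnj c"
    define y where "y = (\<lambda>i. v j i + t * v l i)"
    have yo: "\<forall>l'<j. ipI {..<m} (v l') y = 0"
      using o jl unfolding y_def ortho_def by (auto simp: ipI_lin_right)
    have "complex_of_real (nsq m y) = ipI {..<m} y y" by (simp add: ipI_nsq)
    also have "\<dots> = 1 + cnj t * t" unfolding y_def ipI_expand ojj oll ojl olj by simp
    also have "cnj t * t = complex_of_real (e * e * K)" unfolding t_def K_def
      by (rule cnj_sq_real1)
    finally have "complex_of_real (nsq m y) = complex_of_real (1 + e * e * K)"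
      by simp
    then have ny: "nsq m y = 1 + e * e * K" by (simp only: of_real_eq_iff)
    have "complex_of_real (Qf n m a y) = ipI {..<n} (av m a y) (av m a y)" by (rule Qf_ipI)
    also have "av m a y = (\<lambda>i. A i + t * B i)" unfolding y_def av_lin A_def B_def ..
    also have "ipI {..<n} (\<lambda>i. A i + t * B i) (\<lambda>i. A i + t * B i) =
        ipI {..<n} A A + t * c + cnj t * cnj c + cnj t * t * ipI {..<n} B B"
    proof -
      have "ipI {..<n} B A = cnj c" unfolding c_def by (simp add: ipI_cnj)
      then show ?thesis unfolding ipI_expand c_def by simp
    qed
    also have "ipI {..<n} A A = complex_of_real lam" unfolding lam_def A_def by (simp add: Qf_ipI)
    also have "ipI {..<n} B B = complex_of_real mu" unfolding mu_def B_def by (simp add: Qf_ipI)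
    also have "t * c = complex_of_real (e * K)" unfolding t_def K_def
      by (rule cnj_sq_real2)
    also have "cnj t * cnj c = complex_of_real (e * K)"
    proof -
      have "cnj t * cnj c = complex_of_real e * (c * cnj c)" unfolding t_def by simp
      also have "\<dots> = complex_of_real e * complex_of_real ((cmod c)^2)"
        by (simp only: complex_norm_square)
      finally show ?thesis unfolding K_def by simp
    qed
    also have "cnj t * t = complex_of_real (e * e * K)" unfolding t_def K_def
      by (rule cnj_sq_real1)
    finally have "complex_of_real (Qf n m a y) = complex_of_real (lam + e * K + e * K + e * e * K * mu)"
      by simp
    then have qy: "Qf n m a y = lam + 2 * e * K + e * e * K * mu" by (simp only: of_real_eq_iff)
    have "Qf n m a y \<le> lam * nsq m y" using mp yo unfolding maxprop_def lam_def by blast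
    then show ?thesis unfolding qy ny by (simp add: algebra_simps)
  qed
  define e where "e = 1 / (\<bar>lam - mu\<bar> + 1)"
  have e0: "e > 0" unfolding e_def by simp
  have "e * (lam - mu) \<le> 1" unfolding e_def by (simp add: field_simps)
  then have "e * (lam - mu) * K \<le> K" using K0 mult_right_mono[of "e * (lam - mu)" 1 K] by simp
  moreover have "2 * K \<le> e * K * (lam - mu)" using key[OF e0] e0
    by (simp add: mult.assoc mult_le_cancel_left_pos)
  ultimately have "K \<le> 0" by (simp add: mult_ac)
  then have "c = 0" using K0 unfolding K_def by simp
  then show ?thesis unfolding c_def A_def B_def .
qed

lemma ortho_normalize:
  assumes "\<And>p q. p < r \<Longrightarrow> q < r \<Longrightarrow> ipI I (f p) (f q) = (if p = q then complex_of_real (\<sigma> p) else 0)"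
    and "\<And>p. p < r \<Longrightarrow> \<sigma> p > 0"
  shows "ortho I r (\<lambda>p i. complex_of_real (1 / sqrt (\<sigma> p)) * f p i)"
  unfolding ortho_def
proof (intro allI impI)
  fix p q assume p: "p < r" and q: "q < r"
  have "ipI I (\<lambda>i. complex_of_real (1 / sqrt (\<sigma> p)) * f p i) (\<lambda>i. complex_of_real (1 / sqrt (\<sigma> q)) * f q i)
      = complex_of_real (1 / sqrt (\<sigma> p)) * (complex_of_real (1 / sqrt (\<sigma> q)) * ipI I (f p) (f q))"
    by (simp only: ipI_scale_left ipI_scale_right complex_cnj_complex_of_real)
  also have "\<dots> = (if p = q then 1 else 0)"
  proof (cases "p = q")
    case True
    have "\<sigma> p > 0" using assms(2) p by simp
    then have "1 / sqrt (\<sigma> p) * (1 / sqrt (\<sigma> p) * \<sigma> p) = 1"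
      by (simp add: field_simps)
    then show ?thesis using True assms(1)[OF p q]
      by (metis of_real_1 of_real_mult)
  next
    case False then show ?thesis using assms(1)[OF p q] by simp
  qed
  finally show "ipI I (\<lambda>i. complex_of_real (1 / sqrt (\<sigma> p)) * f p i) (\<lambda>i. complex_of_real (1 / sqrt (\<sigma> q)) * f q i) = (if p = q then 1 else 0)" .
qed

lemma Qf_zero_av:
  assumes "Qf n m a x = 0" "i < n" shows "av m a x i = 0"
proof -
  have "\<forall>i\<in>{..<n}. (cmod (av m a x i))^2 = 0"
    using assms(1) sum_nonneg_eq_0_iff[of "{..<n}" "\<lambda>i. (cmod (av m a x i))^2"] unfolding Qf_def by simp
  then show ?thesis using assms(2) by simp
qed

lemma svd_exists: "\<exists>s. is_svals n m a s"
proof -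
  obtain v where o: "ortho {..<m} m v" and mp: "\<forall>l<m. maxprop n m a v l"
    using exists_vs[of m m n a] by auto
  define lam where "lam l = Qf n m a (v l)" for l
  have lam0: "lam l \<ge> 0" for l unfolding lam_def by (rule Qf_nonneg)
  have dec: "lam l' \<le> lam l" if "l \<le> l'" "l' < m" for l l'
    unfolding lam_def using maxprop_decr[OF o _ that] mp that by auto
  have G: "ipI {..<n} (av m a (v p)) (av m a (v q)) = (if p = q then complex_of_real (lam p) else 0)"
    if "p < m" "q < m" for p q
  proof -
    consider "p < q" | "p = q" | "q < p" by linarith
    then show ?thesis
    proof cases
      case 1 then show ?thesis using img_orth[OF o] mp that by auto
    next
      case 2 then show ?thesis by (simp add: Qf_ipI lam_def)
    next
      case 3
      then have "ipI {..<n} (av m a (v q)) (av m a (v p)) = 0" using img_orth[OF o] mp that by auto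
      then have "cnj (ipI {..<n} (av m a (v q)) (av m a (v p))) = 0" by simp
      then show ?thesis using 3 by (simp add: ipI_cnj)
    qed
  qed
  have zb: "lam l = 0" if "n \<le> l" "l < m" for l
  proof (rule ccontr)
    assume "lam l \<noteq> 0"
    then have pos: "lam l > 0" using lam0[of l] by simp
    have "ortho {..<n} (Suc l) (\<lambda>p i. complex_of_real (1 / sqrt (lam p)) * av m a (v p) i)"
    proof (rule ortho_normalize)
      show "ipI {..<n} (av m a (v p)) (av m a (v q)) = (if p = q then complex_of_real (lam p) else 0)"
        if "p < Suc l" "q < Suc l" for p q using G that \<open>l < m\<close> by simp
      show "lam p > 0" if "p < Suc l" for p using dec[of p l] that pos \<open>l < m\<close> by simp
    qed
    from ortho_count[OF _ this] that show False by simp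
  qed
  define P where "P l \<longleftrightarrow> l = m \<or> (l < m \<and> lam l = 0)" for l
  define r where "r = (LEAST l. P l)"
  have Pr: "P r" unfolding r_def by (rule LeastI[of P m]) (simp add: P_def)
  have rm: "r \<le> m" unfolding r_def by (rule Least_le) (simp add: P_def)
  have rpos: "lam l > 0" if "l < r" for l
  proof -
    have "\<not> P l" using that unfolding r_def using not_less_Least by blast
    then show ?thesis using lam0[of l] that rm unfolding P_def by auto
  qed
  have rzero: "lam l = 0" if "r \<le> l" "l < m" for l
  proof -
    have "r < m" using that by simp
    then have "lam r = 0" using Pr unfolding P_def by simp
    then show ?thesis using dec[OF that] lam0[of l] by simp
  qed
  have rn: "r \<le> n"
  proof (rule ccontr)
    assume "\<not> r \<le> n"
    then have "n < r" by simp
    then have "lam n > 0" using rpos by simp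
    moreover have "lam n = 0" using zb[of n] \<open>n < r\<close> rm by simp
    ultimately show False by simp
  qed
  define w where "w = (\<lambda>p i. complex_of_real (1 / sqrt (lam p)) * av m a (v p) i)"
  have ow: "ortho {..<n} r w" unfolding w_def
  proof (rule ortho_normalize)
    show "ipI {..<n} (av m a (v p)) (av m a (v q)) = (if p = q then complex_of_real (lam p) else 0)"
      if "p < r" "q < r" for p q using G that rm by simp
    show "lam p > 0" if "p < r" for p using rpos that by simp
  qed
  obtain U' where oU: "ortho {..<n} n U'" and Uw: "\<forall>l<r. U' l = w l"
    using ortho_extend_full[of "{..<n}" r w] ow rn by auto
  define d where "d = min n m"
  define s where "s l = (if l < d then sqrt (lam l) else 0)" for l
  define U where "U i l = U' l i" for i l
  define V where "V j l = v l j" for j l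
  have s0: "0 \<le> s l" for l unfolding s_def using lam0 by simp
  have sd: "s l = 0" if "d \<le> l" for l unfolding s_def using that by simp
  have sdec: "s l' \<le> s l" if "l \<le> l'" for l l'
  proof (cases "l' < d")
    case True
    then show ?thesis unfolding s_def using that dec[of l l'] by (simp add: d_def)
  next
    case False then show ?thesis using sd[of l'] s0[of l] by simp
  qed
  have uU: "unitary_fun n U" unfolding unitary_fun_def U_def
    using oU unfolding ortho_def ipI_def by auto
  have uV: "unitary_fun m V" unfolding unitary_fun_def V_def
    using o unfolding ortho_def ipI_def by auto
  have avv: "av m a (v l) i = complex_of_real (s l) * U' l i" if "l < m" "i < n" for l i
  proof (cases "l < r")
    case True
    have ld: "l < d" using True rm rn unfolding d_def by simp
    have "U' l i = complex_of_real (1 / sqrt (lam l)) * av m a (v l) i" using Uw True unfolding w_def by simp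
    then have "complex_of_real (s l) * U' l i = complex_of_real (sqrt (lam l) * (1 / sqrt (lam l))) * av m a (v l) i"
      unfolding s_def using ld by simp
    also have "sqrt (lam l) * (1 / sqrt (lam l)) = 1" using rpos[OF True] by simp
    finally show ?thesis by simp
  next
    case False
    then have "lam l = 0" using rzero that by simp
    then have "av m a (v l) i = 0" using Qf_zero_av that unfolding lam_def by blast
    moreover have "s l = 0" unfolding s_def using \<open>lam l = 0\<close> by simp
    ultimately show ?thesis by simp
  qed
  have dec_a: "a i j = (\<Sum>l<d. U i l * complex_of_real (s l) * cnj (V j l))" if "i < n" "j < m" for i j
  proof -
    have comp: "ev j j' = (\<Sum>l<m. cnj (v l j) * v l j')" if "j' < m" for j'
      using ortho_complete[of "{..<m}" m v j' "ev j"] o that \<open>j < m\<close> by (simp add: ipI_ev_right)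
    have "a i j = (\<Sum>j'<m. a i j' * ev j j')"
      using \<open>j < m\<close> by (simp add: ev_def if_distrib cong: if_cong)
    also have "\<dots> = (\<Sum>j'<m. a i j' * (\<Sum>l<m. cnj (v l j) * v l j'))"
      by (intro sum.cong refl) (simp add: comp)
    also have "\<dots> = (\<Sum>l<m. cnj (v l j) * av m a (v l) i)"
      unfolding av_def by (simp add: sum_distrib_left mult_ac) (rule sum.swap)
    also have "\<dots> = (\<Sum>l<m. U i l * complex_of_real (s l) * cnj (V j l))"
      by (intro sum.cong refl) (simp add: avv \<open>i < n\<close> U_def V_def mult_ac)
    also have "\<dots> = (\<Sum>l<d. U i l * complex_of_real (s l) * cnj (V j l))"
      by (rule sum.mono_neutral_right) (auto simp: d_def sd)
    finally show ?thesis .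
  qed
  have "is_svals n m a s"
    unfolding is_svals_def
    using s0 sd sdec uU uV dec_a unfolding d_def by blast
  then show ?thesis by blast
qed

lemma ipI_cong_right: "(\<And>i. i \<in> I \<Longrightarrow> y i = y' i) \<Longrightarrow> ipI I x y = ipI I x y'"
  unfolding ipI_def by (intro sum.cong) auto

lemma parseval:
  assumes "finite I" "ortho I k u" "card I \<le> k"
  shows "ipI I x y = (\<Sum>l<k. cnj (ipI I (u l) x) * ipI I (u l) y)"
proof -
  have "ipI I x y = ipI I x (\<lambda>i. \<Sum>l<k. ipI I (u l) y * u l i)"
    by (rule ipI_cong_right) (use ortho_complete[OF assms] in auto)
  also have "\<dots> = (\<Sum>l<k. ipI I (u l) y * ipI I x (u l))" by (rule ipI_sum_right)
  also have "\<dots> = (\<Sum>l<k. cnj (ipI I (u l) x) * ipI I (u l) y)"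
    by (intro sum.cong refl) (simp add: ipI_cnj mult.commute)
  finally show ?thesis .
qed

lemma transfer:
  assumes o: "ortho {..<m} m w"
    and G: "\<And>p q. p < m \<Longrightarrow> q < m \<Longrightarrow> ipI {..<n} (av m a (w p)) (av m a (w q)) = (if p = q then complex_of_real (\<sigma> p) else 0)"
    and p: "p < m"
  shows "ipI {..<n} (av m a (w p)) (av m a y) = complex_of_real (\<sigma> p) * ipI {..<m} (w p) y"
proof -
  have "av m a y = av m a (\<lambda>j. \<Sum>l<m. ipI {..<m} (w l) y * w l j)"
    unfolding av_def by (intro ext sum.cong refl) (use ortho_complete[of "{..<m}" m w] o in auto)
  also have "\<dots> = (\<lambda>i. \<Sum>l<m. ipI {..<m} (w l) y * av m a (w l) i)"
    unfolding av_def by (intro ext) (simp add: sum_distrib_left mult_ac, rule sum.swap)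
  finally have "ipI {..<n} (av m a (w p)) (av m a y) = (\<Sum>l<m. ipI {..<m} (w l) y * ipI {..<n} (av m a (w p)) (av m a (w l)))"
    by (simp add: ipI_sum_right)
  also have "\<dots> = (\<Sum>l<m. ipI {..<m} (w l) y * (if p = l then complex_of_real (\<sigma> p) else 0))"
    by (intro sum.cong refl) (simp add: G p)
  also have "\<dots> = complex_of_real (\<sigma> p) * ipI {..<m} (w p) y"
    using p by (simp add: if_distrib cong: if_cong)
  finally show ?thesis .
qed

lemma gram_from_svals:
  assumes U: "unitary_fun n U" and V: "unitary_fun m V"
    and sd: "\<forall>l. min n m \<le> l \<longrightarrow> s l = 0"
    and dec: "\<forall>i<n. \<forall>j<m. a i j = (\<Sum>l<min n m. U i l * complex_of_real (s l) * cnj (V j l))"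
  shows "ortho {..<m} m (\<lambda>l j. V j l)"
    and "\<And>p q. p < m \<Longrightarrow> q < m \<Longrightarrow> ipI {..<n} (av m a (\<lambda>j. V j p)) (av m a (\<lambda>j. V j q)) =
             (if p = q then complex_of_real ((s p)^2) else 0)"
proof -
  show "ortho {..<m} m (\<lambda>l j. V j l)" using V unfolding unitary_fun_def ortho_def ipI_def by auto
  have avc: "av m a (\<lambda>j. V j q) i = complex_of_real (s q) * U i q" if "q < m" "i < n" for q i
  proof -
    have "av m a (\<lambda>j. V j q) i = (\<Sum>j<m. (\<Sum>l<min n m. U i l * complex_of_real (s l) * cnj (V j l)) * V j q)"
      unfolding av_def using dec that by simp
    also have "\<dots> = (\<Sum>l<min n m. U i l * complex_of_real (s l) * (\<Sum>j<m. cnj (V j l) * V j q))"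
      by (simp add: sum_distrib_left sum_distrib_right mult_ac) (rule sum.swap)
    also have "\<dots> = (\<Sum>l<min n m. U i l * complex_of_real (s l) * (if l = q then 1 else 0))"
      using V that unfolding unitary_fun_def by (intro sum.cong refl) auto
    also have "\<dots> = (if q < min n m then U i q * complex_of_real (s q) else 0)"
      by (simp add: if_distrib cong: if_cong)
    also have "\<dots> = complex_of_real (s q) * U i q" using sd by auto
    finally show ?thesis .
  qed
  fix p q assume p: "p < m" and q: "q < m"
  have "ipI {..<n} (av m a (\<lambda>j. V j p)) (av m a (\<lambda>j. V j q)) =
        ipI {..<n} (\<lambda>i. complex_of_real (s p) * U i p) (\<lambda>i. complex_of_real (s q) * U i q)"
    unfolding ipI_def by (intro sum.cong refl) (simp add: avc p q)
  also have "\<dots> = complex_of_real (s p) * (complex_of_real (s q) * (\<Sum>i<n. cnj (U i p) * U i q))"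
    by (simp only: ipI_scale_left ipI_scale_right complex_cnj_complex_of_real) (simp add: ipI_def)
  also have "\<dots> = (if p = q then complex_of_real ((s p)^2) else 0)"
  proof (cases "p < n \<and> q < n")
    case True
    then show ?thesis using U unfolding unitary_fun_def by (simp add: power2_eq_square)
  next
    case False
    then have "s p = 0 \<or> s q = 0" using sd by auto
    then show ?thesis using sd False by auto
  qed
  finally show "ipI {..<n} (av m a (\<lambda>j. V j p)) (av m a (\<lambda>j. V j q)) =
             (if p = q then complex_of_real ((s p)^2) else 0)" .
qed

lemma unique_core:
  assumes o: "ortho {..<m} m w"
    and G: "\<And>p q. p < m \<Longrightarrow> q < m \<Longrightarrow> ipI {..<n} (av m a (w p)) (av m a (w q)) = (if p = q then complex_of_real ((s p)^2) else 0)"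
    and o': "ortho {..<m} m w'"
    and G': "\<And>p q. p < m \<Longrightarrow> q < m \<Longrightarrow> ipI {..<n} (av m a (w' p)) (av m a (w' q)) = (if p = q then complex_of_real ((s' p)^2) else 0)"
    and s0: "\<forall>l. 0 \<le> s l" and s'0: "\<forall>l. 0 \<le> s' l"
    and sdec: "\<forall>l l'. l \<le> l' \<longrightarrow> s l' \<le> s l" and s'dec: "\<forall>l l'. l \<le> l' \<longrightarrow> s' l' \<le> s' l"
    and j: "j < m"
  shows "s j \<le> s' j"
proof (rule ccontr)
  assume "\<not> s j \<le> s' j"
  then have lt: "s' j < s j" by simp
  define M where "M p q = ipI {..<m} (w' p) (w q)" for p q
  have rel: "complex_of_real ((s' p)^2) * M p q = complex_of_real ((s q)^2) * M p q" if "p < m" "q < m" for p q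
  proof -
    have "ipI {..<n} (av m a (w' p)) (av m a (w q)) = complex_of_real ((s' p)^2) * M p q"
      unfolding M_def by (rule transfer[OF o' G' that(1)])
    moreover have "ipI {..<n} (av m a (w q)) (av m a (w' p)) = complex_of_real ((s q)^2) * ipI {..<m} (w q) (w' p)"
      by (rule transfer[OF o G that(2)])
    then have "cnj (ipI {..<n} (av m a (w q)) (av m a (w' p))) = complex_of_real ((s q)^2) * M p q"
      unfolding M_def by (simp add: ipI_cnj)
    then have "ipI {..<n} (av m a (w' p)) (av m a (w q)) = complex_of_real ((s q)^2) * M p q"
      by (simp add: ipI_cnj)
    ultimately show ?thesis by metis
  qed
  have Mz: "M p q = 0" if "j \<le> p" "p < m" "q \<le> j" for p q
  proof -
    have "s' p \<le> s' j" using s'dec that by blast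
    moreover have "s j \<le> s q" using sdec that by blast
    ultimately have "s' p < s q" using lt by simp
    then have "(s' p)^2 < (s q)^2" using s'0 by (intro power_strict_mono) auto
    then have "complex_of_real ((s' p)^2) \<noteq> complex_of_real ((s q)^2)"
      by (metis of_real_eq_iff order_less_irrefl)
    then show ?thesis using rel[of p q] that j by simp
  qed
  define mu where "mu q p = M p q" for q p
  have "ortho {..<m} (Suc j) mu"
    unfolding ortho_def
  proof (intro allI impI)
    fix q q' assume q: "q < Suc j" and q': "q' < Suc j"
    have "ipI {..<m} (mu q) (mu q') = (\<Sum>p<m. cnj (ipI {..<m} (w' p) (w q)) * ipI {..<m} (w' p) (w q'))"
      unfolding ipI_def mu_def M_def by simp
    also have "\<dots> = ipI {..<m} (w q) (w q')"
      by (rule parseval[symmetric]) (use o' in auto)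
    also have "\<dots> = (if q = q' then 1 else 0)" using o q q' j unfolding ortho_def by auto
    finally show "ipI {..<m} (mu q) (mu q') = (if q = q' then 1 else 0)" .
  qed
  moreover have "ipI {..<m} (mu q) (mu q') = ipI {..<j} (mu q) (mu q')" if "q < Suc j" "q' < Suc j" for q q'
    unfolding ipI_def
    by (rule sum.mono_neutral_right) (use j that Mz in \<open>auto simp: mu_def\<close>)
  ultimately have "ortho {..<j} (Suc j) mu" unfolding ortho_def by simp
  from ortho_count[OF _ this] show False by simp
qed

lemma svals_unique:
  assumes "is_svals n m a s" "is_svals n m a s'"
  shows "s = s'"
proof
  fix l
  obtain U V where A: "unitary_fun n U" "unitary_fun m V"
    "\<forall>i<n. \<forall>j<m. a i j = (\<Sum>l<min n m. U i l * complex_of_real (s l) * cnj (V j l))"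
    using assms(1) unfolding is_svals_def by blast
  obtain U' V' where B: "unitary_fun n U'" "unitary_fun m V'"
    "\<forall>i<n. \<forall>j<m. a i j = (\<Sum>l<min n m. U' i l * complex_of_real (s' l) * cnj (V' j l))"
    using assms(2) unfolding is_svals_def by blast
  have s: "\<forall>l. 0 \<le> s l" "\<forall>l. min n m \<le> l \<longrightarrow> s l = 0" "\<forall>l l'. l \<le> l' \<longrightarrow> s l' \<le> s l"
    using assms(1) unfolding is_svals_def by blast+
  have s': "\<forall>l. 0 \<le> s' l" "\<forall>l. min n m \<le> l \<longrightarrow> s' l = 0" "\<forall>l l'. l \<le> l' \<longrightarrow> s' l' \<le> s' l"
    using assms(2) unfolding is_svals_def by blast+
  note gA = gram_from_svals[OF A(1,2) s(2) A(3)]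
  note gB = gram_from_svals[OF B(1,2) s'(2) B(3)]
  show "s l = s' l"
  proof (cases "l < m")
    case True
    have "s l \<le> s' l" by (rule unique_core[OF gA gB s(1) s'(1) s(3) s'(3) True])
    moreover have "s' l \<le> s l" by (rule unique_core[OF gB gA s'(1) s(1) s'(3) s(3) True])
    ultimately show ?thesis by simp
  next
    case False then show ?thesis using s(2) s'(2) by simp
  qed
qed

lemma svals_ex1: "\<exists>!s. is_svals n m a s"
  using svd_exists svals_unique by blast

lemma schmidt_eq: "is_svals n m a s \<Longrightarrow> schmidt n m a j = s (j - 1)"
  unfolding schmidt_def using svals_ex1 the1_equality by metis

lemma schmidt_ex: "\<exists>s. is_svals n m a s \<and> (\<forall>j. schmidt n m a j = s (j - 1))"
  using svd_exists schmidt_eq by blast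

lemma adm_int:
  "admissible n m (real k) a \<longleftrightarrow> unit_vec n m a \<and> (\<forall>j. k + 1 \<le> j \<longrightarrow> schmidt n m a j = 0)"
  unfolding admissible_def Let_def by simp

lemma adm_int1:
  "admissible n m (real k + 1) a \<longleftrightarrow> unit_vec n m a \<and> (\<forall>j. k + 2 \<le> j \<longrightarrow> schmidt n m a j = 0)"
proof -
  have "real k + 1 = real (k + 1)" by simp
  then show ?thesis unfolding admissible_def Let_def
    by (simp only: floor_of_nat ceiling_of_nat nat_int) (simp add: add.commute)
qed

lemma adm_frac:
  assumes "0 < \<theta>" "\<theta> < 1"
  shows "admissible n m (real k + \<theta>) a \<longleftrightarrow> unit_vec n m a \<and> (\<forall>j. k + 2 \<le> j \<longrightarrow> schmidt n m a j = 0) \<and>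
     schmidt n m a (k + 1) \<le> \<theta> / real k * (\<Sum>j=1..k. schmidt n m a j)"
proof -
  have f: "\<lfloor>real k + \<theta>\<rfloor> = int k" using assms by (simp add: floor_eq_iff)
  have c: "\<lceil>real k + \<theta>\<rceil> = int k + 1" using assms by (simp add: ceiling_eq_iff)
  show ?thesis unfolding admissible_def Let_def f c using assms
    by (simp add: nat_add_distrib)
qed

lemma schmidt_nonneg: "0 \<le> schmidt n m a j"
  using schmidt_ex[of n m a] unfolding is_svals_def by metis

lemma col_norm:
  assumes "unitary_fun n U" "l < n"
  shows "(\<Sum>r<n. (cmod (U r l))^2) = 1"
proof -
  have "(\<Sum>r<n. cnj (U r l) * U r l) = 1" using assms unfolding unitary_fun_def by auto
  then have "complex_of_real (\<Sum>r<n. (cmod (U r l))^2) = complex_of_real 1"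
    by (simp add: cnj_mult_self)
  then show ?thesis by (simp only: of_real_eq_iff)
qed

lemma amgm2: "(x::real) * y \<le> (x^2 + y^2) / 2"
proof -
  have "0 \<le> (x - y)^2" by simp
  then show ?thesis by (simp add: power2_eq_square algebra_simps)
qed

lemma trace_bound:
  assumes sv: "is_svals n m a s" and K: "K \<le> n" "K \<le> m"
  shows "cmod (\<Sum>i<K. a i i) \<le> (\<Sum>l<min n m. s l)"
proof -
  obtain U V where uU: "unitary_fun n U" and uV: "unitary_fun m V"
    and dec: "\<forall>i<n. \<forall>j<m. a i j = (\<Sum>l<min n m. U i l * complex_of_real (s l) * cnj (V j l))"
    using sv unfolding is_svals_def by blast
  have s0: "\<forall>l. 0 \<le> s l" using sv unfolding is_svals_def by blast
  have "(\<Sum>i<K. a i i) = (\<Sum>i<K. \<Sum>l<min n m. U i l * complex_of_real (s l) * cnj (V i l))"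
    using dec K by (intro sum.cong refl) auto
  also have "\<dots> = (\<Sum>l<min n m. complex_of_real (s l) * (\<Sum>i<K. U i l * cnj (V i l)))"
    by (subst sum.swap) (simp add: sum_distrib_left mult_ac)
  finally have eq: "(\<Sum>i<K. a i i) = (\<Sum>l<min n m. complex_of_real (s l) * (\<Sum>i<K. U i l * cnj (V i l)))" .
  have inner: "cmod (\<Sum>i<K. U i l * cnj (V i l)) \<le> 1" if l: "l < min n m" for l
  proof -
    have "cmod (\<Sum>i<K. U i l * cnj (V i l)) \<le> (\<Sum>i<K. cmod (U i l * cnj (V i l)))" by (rule norm_sum)
    also have "\<dots> = (\<Sum>i<K. cmod (U i l) * cmod (V i l))" by (simp add: norm_mult)
    also have "\<dots> \<le> (\<Sum>i<K. ((cmod (U i l))^2 + (cmod (V i l))^2) / 2)" by (intro sum_mono amgm2)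
    also have "\<dots> = ((\<Sum>i<K. (cmod (U i l))^2) + (\<Sum>i<K. (cmod (V i l))^2)) / 2"
      by (simp only: sum_divide_distrib sum.distrib add_divide_distrib)
    also have "(\<Sum>i<K. (cmod (U i l))^2) \<le> (\<Sum>i<n. (cmod (U i l))^2)"
      by (rule sum_mono2) (use K in auto)
    also have "(\<Sum>i<K. (cmod (V i l))^2) \<le> (\<Sum>i<m. (cmod (V i l))^2)"
      by (rule sum_mono2) (use K in auto)
    also have "(\<Sum>i<n. (cmod (U i l))^2) = 1" using col_norm[OF uU] l by simp
    also have "(\<Sum>i<m. (cmod (V i l))^2) = 1" using col_norm[OF uV] l by simp
    finally show ?thesis by simp
  qed
  have "cmod (\<Sum>i<K. a i i) \<le> (\<Sum>l<min n m. cmod (complex_of_real (s l) * (\<Sum>i<K. U i l * cnj (V i l))))"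
    unfolding eq by (rule norm_sum)
  also have "\<dots> \<le> (\<Sum>l<min n m. s l)"
  proof (rule sum_mono)
    fix l assume "l \<in> {..<min n m}"
    then have "cmod (\<Sum>i<K. U i l * cnj (V i l)) \<le> 1" using inner by simp
    then have "s l * cmod (\<Sum>i<K. U i l * cnj (V i l)) \<le> s l * 1" using s0 by (intro mult_left_mono) auto
    then show "cmod (complex_of_real (s l) * (\<Sum>i<K. U i l * cnj (V i l))) \<le> s l"
      using s0 by (simp add: norm_mult)
  qed
  finally show ?thesis .
qed

lemma frob:
  assumes sv: "is_svals n m a s"
  shows "(\<Sum>i<n. \<Sum>j<m. (cmod (a i j))^2) = (\<Sum>l<min n m. (s l)^2)"
proof -
  obtain U V where uU: "unitary_fun n U" and uV: "unitary_fun m V"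
    and dec: "\<forall>i<n. \<forall>j<m. a i j = (\<Sum>l<min n m. U i l * complex_of_real (s l) * cnj (V j l))"
    using sv unfolding is_svals_def by blast
  have sd: "\<forall>l. min n m \<le> l \<longrightarrow> s l = 0" using sv unfolding is_svals_def by blast
  note g = gram_from_svals[OF uU uV sd dec]
  define vc where "vc = (\<lambda>l j. V j l)"
  have o: "ortho {..<m} m vc" using g(1) unfolding vc_def .
  have row: "(\<Sum>j<m. (cmod (a i j))^2) = (\<Sum>l<m. (cmod (av m a (vc l) i))^2)" for i
  proof -
    define x where "x = (\<lambda>j. cnj (a i j))"
    have "complex_of_real (\<Sum>j<m. (cmod (a i j))^2) = ipI {..<m} x x"
      unfolding x_def by (simp add: ipI_self)
    also have "\<dots> = (\<Sum>l<m. cnj (ipI {..<m} (vc l) x) * ipI {..<m} (vc l) x)"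
      by (rule parseval) (use o in auto)
    also have "\<dots> = (\<Sum>l<m. complex_of_real ((cmod (av m a (vc l) i))^2))"
    proof (intro sum.cong refl)
      fix l
      have h: "ipI {..<m} (vc l) x = cnj (av m a (vc l) i)"
        unfolding ipI_def av_def x_def by (simp add: mult.commute)
      show "cnj (ipI {..<m} (vc l) x) * ipI {..<m} (vc l) x = complex_of_real ((cmod (av m a (vc l) i))^2)"
        by (simp only: h complex_cnj_cnj complex_norm_square)
    qed
    finally show ?thesis by (simp only: of_real_sum[symmetric] of_real_eq_iff)
  qed
  have "(\<Sum>i<n. \<Sum>j<m. (cmod (a i j))^2) = (\<Sum>l<m. Qf n m a (vc l))"
    unfolding row Qf_def by (rule sum.swap)
  also have "\<dots> = (\<Sum>l<m. (s l)^2)"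
  proof (intro sum.cong refl)
    fix l assume "l \<in> {..<m}"
    then have "complex_of_real (Qf n m a (vc l)) = complex_of_real ((s l)^2)"
      unfolding Qf_ipI vc_def using g(2)[of l l] by simp
    then show "Qf n m a (vc l) = (s l)^2" by (simp only: of_real_eq_iff)
  qed
  also have "\<dots> = (\<Sum>l<min n m. (s l)^2)"
    by (rule sum.mono_neutral_right) (auto simp: sd)
  finally show ?thesis .
qed

lemma alg_bound:
  fixes K t S Q \<theta> :: real
  assumes K: "K \<ge> 1" and th: "0 < \<theta>" "\<theta> < 1" and S: "S \<ge> 0" and t: "t \<ge> 0"
    and tS: "t \<le> \<theta> / K * S" and SQ: "S^2 \<le> K * Q" and Qt: "Q + t^2 = 1"
  shows "(S + t)^2 \<le> (K + \<theta>)^2 / (K + \<theta>^2)"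
proof -
  have Kp: "K > 0" using K by simp
  have f1: "\<theta> * S - K * t \<ge> 0" using tS Kp by (simp add: field_simps)
  have kt: "K * t \<le> \<theta> * S" using f1 by simp
  have c0: "K + 2 * \<theta> - 1 \<ge> 0" using K th by simp
  have "(K + 2 * \<theta> - 1) * (K * t) \<le> (K + 2 * \<theta> - 1) * (\<theta> * S)"
    by (rule mult_left_mono[OF kt c0])
  moreover have "(K + 2 * \<theta> - 1) * \<theta> \<le> 2 * K + \<theta> - K * \<theta>"
  proof -
    have "0 \<le> (1 - \<theta>) * (K + \<theta>)" using th K by simp
    then show ?thesis by (simp add: algebra_simps)
  qed
  then have "(K + 2 * \<theta> - 1) * \<theta> * S \<le> (2 * K + \<theta> - K * \<theta>) * S"
    by (rule mult_right_mono) (use S in simp)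
  ultimately have f2: "(2 * K + \<theta> - K * \<theta>) * S - K * (K + 2 * \<theta> - 1) * t \<ge> 0"
    by (simp add: algebra_simps)
  have E: "(K + \<theta>)^2 * (S^2 + K * t^2) - K * (K + \<theta>^2) * (S + t)^2 =
       (\<theta> * S - K * t) * ((2 * K + \<theta> - K * \<theta>) * S - K * (K + 2 * \<theta> - 1) * t)"
    by (simp add: power2_eq_square algebra_simps)
  have "0 \<le> (\<theta> * S - K * t) * ((2 * K + \<theta> - K * \<theta>) * S - K * (K + 2 * \<theta> - 1) * t)"
    using f1 f2 by simp
  then have h1: "K * (K + \<theta>^2) * (S + t)^2 \<le> (K + \<theta>)^2 * (S^2 + K * t^2)" using E by simp
  have Q1: "Q = 1 - t^2" using Qt by simp
  have h2: "S^2 + K * t^2 \<le> K" using SQ unfolding Q1 by (simp add: algebra_simps)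
  have h3: "(K + \<theta>)^2 * (S^2 + K * t^2) \<le> (K + \<theta>)^2 * K" by (rule mult_left_mono[OF h2]) simp
  have e1: "K * ((K + \<theta>^2) * (S + t)^2) = K * (K + \<theta>^2) * (S + t)^2" by (simp add: mult_ac)
  have e2: "K * (K + \<theta>)^2 = (K + \<theta>)^2 * K" by (simp add: mult_ac)
  have "K * ((K + \<theta>^2) * (S + t)^2) \<le> K * (K + \<theta>)^2" using h1 h3 e1 e2 by linarith
  then have "(K + \<theta>^2) * (S + t)^2 \<le> (K + \<theta>)^2" using Kp by simp
  moreover have "K + \<theta>^2 > 0" using Kp by (simp add: add_pos_nonneg)
  ultimately show ?thesis by (simp add: field_simps)
qed

definition om :: "nat \<Rightarrow> nat \<times> nat \<Rightarrow> complex" where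
  "om K x = (if fst x = snd x \<and> fst x < K then 1 else 0)"

definition wit :: "nat \<Rightarrow> nat \<Rightarrow> nat \<Rightarrow> real \<Rightarrow> (nat \<times> nat) \<Rightarrow> (nat \<times> nat) \<Rightarrow> complex" where
  "wit n m K c = (\<lambda>x y. if x \<in> tidx n m \<and> y \<in> tidx n m
      then (if x = y then complex_of_real c else 0) - om K x * om K y else 0)"

lemma wit_herm: "hermitian_op n m (wit n m K c)"
  unfolding hermitian_op_def wit_def om_def by auto

lemma sum_om:
  assumes "K \<le> n" "K \<le> m"
  shows "(\<Sum>x\<in>tidx n m. om K x * f x) = (\<Sum>i<K. f (i, i))"
proof -
  have fin: "finite (tidx n m)" unfolding tidx_def by simp
  have sub: "(\<lambda>i. (i, i)) ` {..<K} \<subseteq> tidx n m" using assms unfolding tidx_def by auto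
  have "(\<Sum>x\<in>tidx n m. om K x * f x) = (\<Sum>x\<in>(\<lambda>i. (i, i)) ` {..<K}. om K x * f x)"
    by (rule sum.mono_neutral_right[OF fin sub]) (auto simp: om_def)
  also have "\<dots> = (\<Sum>i<K. om K (i, i) * f (i, i))"
    by (rule sum.reindex_cong[where l = "\<lambda>i. (i, i)"]) (auto simp: inj_on_def)
  also have "\<dots> = (\<Sum>i<K. f (i, i))" by (simp add: om_def)
  finally show ?thesis .
qed

lemma sum_tidx: "(\<Sum>x\<in>tidx n m. g x) = (\<Sum>i<n. \<Sum>j<m. g (i, j))"
  unfolding tidx_def by (simp add: sum.cartesian_product)

lemma qform_wit:
  assumes "K \<le> n" "K \<le> m"
  shows "Re (qform n m (wit n m K c) a) = c * (\<Sum>i<n. \<Sum>j<m. (cmod (a i j))^2) - (cmod (\<Sum>i<K. a i i))^2"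
proof -
  define b where "b = case_prod a"
  define T where "T = (\<Sum>i<K. a i i)"
  have "qform n m (wit n m K c) a =
     (\<Sum>x\<in>tidx n m. \<Sum>y\<in>tidx n m. cnj (b x) * ((if x = y then complex_of_real c else 0) - om K x * om K y) * b y)"
    unfolding qform_def b_def wit_def by (intro sum.cong refl) auto
  also have "\<dots> = (\<Sum>x\<in>tidx n m. \<Sum>y\<in>tidx n m. (if x = y then complex_of_real c * (cnj (b x) * b y) else 0))
      - (\<Sum>x\<in>tidx n m. \<Sum>y\<in>tidx n m. (om K x * cnj (b x)) * (om K y * b y))"
  proof -
    have pt: "\<And>x y. cnj (b x) * ((if x = y then complex_of_real c else 0) - om K x * om K y) * b y =
       (if x = y then complex_of_real c * (cnj (b x) * b y) else 0) - (om K x * cnj (b x)) * (om K y * b y)"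
      by (simp add: algebra_simps)
    show ?thesis by (simp only: pt sum_subtractf)
  qed
  also have "(\<Sum>x\<in>tidx n m. \<Sum>y\<in>tidx n m. (if x = y then complex_of_real c * (cnj (b x) * b y) else 0))
      = (\<Sum>x\<in>tidx n m. complex_of_real c * (cnj (b x) * b x))"
    unfolding tidx_def by (intro sum.cong refl) (simp add: if_distrib cong: if_cong)
  also have "\<dots> = complex_of_real (c * (\<Sum>i<n. \<Sum>j<m. (cmod (a i j))^2))"
    by (simp add: sum_tidx b_def cnj_mult_self sum_distrib_left)
  also have "(\<Sum>x\<in>tidx n m. \<Sum>y\<in>tidx n m. (om K x * cnj (b x)) * (om K y * b y))
      = (\<Sum>x\<in>tidx n m. om K x * cnj (b x)) * (\<Sum>y\<in>tidx n m. om K y * b y)"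
    by (simp add: sum_product)
  also have "(\<Sum>y\<in>tidx n m. om K y * b y) = T"
    unfolding T_def using sum_om[OF assms, of b] by (simp add: b_def)
  also have "(\<Sum>x\<in>tidx n m. om K x * cnj (b x)) = cnj T"
    unfolding T_def using sum_om[OF assms, of "\<lambda>x. cnj (b x)"] by (simp add: b_def)
  also have "cnj T * T = complex_of_real ((cmod T)^2)" by (rule cnj_mult_self)
  finally have "qform n m (wit n m K c) a = complex_of_real (c * (\<Sum>i<n. \<Sum>j<m. (cmod (a i j))^2) - (cmod T)^2)"
    by simp
  then show ?thesis unfolding T_def by simp
qed

definition Lf :: "nat \<Rightarrow> nat \<Rightarrow> ((nat \<times> nat) \<Rightarrow> (nat \<times> nat) \<Rightarrow> complex) \<Rightarrow> ((nat \<times> nat) \<Rightarrow> (nat \<times> nat) \<Rightarrow> complex) \<Rightarrow> real" where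
  "Lf n m W X = Re (\<Sum>x\<in>tidx n m. \<Sum>y\<in>tidx n m. W x y * X y x)"

lemma rank1_app: "rank1_op a y x = case_prod a y * cnj (case_prod a x)"
  unfolding rank1_op_def by (cases x, cases y) simp

lemma Lf_rank1: "Lf n m W (rank1_op a) = Re (qform n m W a)"
  unfolding Lf_def qform_def rank1_app by (simp add: mult_ac)

lemma sum_lin:
  fixes W :: "'a \<Rightarrow> 'a \<Rightarrow> complex"
  shows "(\<Sum>x\<in>T. \<Sum>y\<in>T. W x y * (\<Sum>i<N. c i * v i y x)) = (\<Sum>i<N. c i * (\<Sum>x\<in>T. \<Sum>y\<in>T. W x y * v i y x))"
proof -
  have "(\<Sum>x\<in>T. \<Sum>y\<in>T. W x y * (\<Sum>i<N. c i * v i y x)) = (\<Sum>x\<in>T. \<Sum>y\<in>T. \<Sum>i<N. c i * (W x y * v i y x))"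
    by (simp only: sum_distrib_left mult.left_commute)
  also have "\<dots> = (\<Sum>x\<in>T. \<Sum>i<N. \<Sum>y\<in>T. c i * (W x y * v i y x))"
    by (intro sum.cong refl) (rule sum.swap)
  also have "\<dots> = (\<Sum>i<N. \<Sum>x\<in>T. \<Sum>y\<in>T. c i * (W x y * v i y x))"
    by (rule sum.swap)
  also have "\<dots> = (\<Sum>i<N. c i * (\<Sum>x\<in>T. \<Sum>y\<in>T. W x y * v i y x))"
    by (simp only: sum_distrib_left)
  finally show ?thesis .
qed
lemma Re_ofr_mult: "Re (complex_of_real c * z) = c * Re z"
  by simp

lemma Lf_cone:
  assumes "\<forall>v\<in>S. Lf n m W v \<ge> 0" "X \<in> cvx_cone_gen S"
  shows "Lf n m W X \<ge> 0"
proof -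
  obtain N :: nat and c v where cv: "\<forall>i<N. 0 \<le> c i \<and> v i \<in> S"
    and X: "X = (\<lambda>x y. \<Sum>i<N. complex_of_real (c i) * v i x y)"
  proof -
    have "\<exists>(N::nat) c v. (\<forall>i<N. 0 \<le> c i \<and> v i \<in> S) \<and> X = (\<lambda>x y. \<Sum>i<N. complex_of_real (c i) * v i x y)"
      using assms(2) unfolding cvx_cone_gen_def by simp
    then show ?thesis using that by (elim exE conjE) 
  qed
  have "(\<Sum>x\<in>tidx n m. \<Sum>y\<in>tidx n m. W x y * X y x) =
        (\<Sum>i<N. complex_of_real (c i) * (\<Sum>x\<in>tidx n m. \<Sum>y\<in>tidx n m. W x y * v i y x))"
    unfolding X by (rule sum_lin)
  then have "Lf n m W X = (\<Sum>i<N. c i * Lf n m W (v i))"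
    unfolding Lf_def by (simp only: Re_sum Re_ofr_mult) 
  also have "\<dots> \<ge> 0" using cv assms(1) by (intro sum_nonneg mult_nonneg_nonneg) auto
  finally show ?thesis .
qed

lemma cont_Lf: "continuous_on UNIV (Lf n m W)"
proof -
  have c: "continuous_on UNIV (\<lambda>X::(nat \<times> nat) \<Rightarrow> (nat \<times> nat) \<Rightarrow> complex. X y x)" for x y
    by (rule continuous_on_product_then_coordinatewise[OF continuous_on_product_coordinates])
  show ?thesis unfolding Lf_def
    by (intro continuous_intros c)
qed

lemma Kset_Lf:
  assumes "\<forall>a\<in>Vset n m \<beta>. 0 \<le> Re (qform n m W a)" "X \<in> Kset n m \<beta>"
  shows "Lf n m W X \<ge> 0"
proof -
  have "cvx_cone_gen (rank1_op ` Vset n m \<beta>) \<subseteq> {X. Lf n m W X \<ge> 0}"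
    using Lf_cone[of "rank1_op ` Vset n m \<beta>" n m W] assms(1) by (auto simp: Lf_rank1)
  moreover have "closed {X. Lf n m W X \<ge> 0}"
    using closed_Collect_le[OF continuous_on_const cont_Lf, of 0 n m W] by simp
  ultimately have "Kset n m \<beta> \<subseteq> {X. Lf n m W X \<ge> 0}"
    unfolding Kset_def by (rule closure_minimal)
  then show ?thesis using assms(2) by auto
qed

lemma rank1_in_K: "a \<in> Vset n m \<beta> \<Longrightarrow> rank1_op a \<in> Kset n m \<beta>"
proof -
  assume a: "a \<in> Vset n m \<beta>"
  have "rank1_op a \<in> cvx_cone_gen (rank1_op ` Vset n m \<beta>)"
    unfolding cvx_cone_gen_def
    by (rule CollectI, rule exI[of _ 1], rule exI[of _ "\<lambda>_. 1"], rule exI[of _ "\<lambda>_. rank1_op a"]) (use a in auto)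
  then show ?thesis unfolding Kset_def using closure_subset by blast
qed

definition dg :: "nat \<Rightarrow> (nat \<Rightarrow> real) \<Rightarrow> nat \<Rightarrow> nat \<Rightarrow> complex" where
  "dg K c = (\<lambda>i j. if i = j \<and> i < K then complex_of_real (c i) else 0)"

lemma dg_svals:
  assumes K: "K \<le> min n m" and c0: "\<forall>l. 0 \<le> c l" and cd: "\<forall>l l'. l \<le> l' \<and> l' < K \<longrightarrow> c l' \<le> c l"
  shows "is_svals n m (dg K c) (\<lambda>l. if l < K then c l else 0)"
proof -
  define I where "I = (\<lambda>i j::nat. if i = j then (1::complex) else 0)"
  have uI: "unitary_fun N I" for N
    unfolding unitary_fun_def
  proof (intro allI impI)
    fix i j assume "i < N" "j < N"
    have "(\<Sum>l<N. cnj (I l i) * I l j) = (\<Sum>l<N. if l = i then (if i = j then 1 else 0) else 0)"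
      unfolding I_def by (intro sum.cong refl) auto
    also have "\<dots> = (if i = j then 1 else 0)" using \<open>i < N\<close> by simp
    finally show "(\<Sum>l<N. cnj (I l i) * I l j) = (if i = j then 1 else 0)" .
  qed
  have dec: "dg K c i j = (\<Sum>l<min n m. I i l * complex_of_real (if l < K then c l else 0) * cnj (I j l))"
    if "i < n" "j < m" for i j
  proof -
    have "(\<Sum>l<min n m. I i l * complex_of_real (if l < K then c l else 0) * cnj (I j l)) =
          (\<Sum>l<min n m. if l = i then (if i = j \<and> i < K then complex_of_real (c i) else 0) else 0)"
      unfolding I_def by (intro sum.cong refl) auto
    also have "\<dots> = dg K c i j" using that K unfolding dg_def by auto
    finally show ?thesis by simp
  qed
  show ?thesis unfolding is_svals_def
  proof (intro conjI allI impI)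
    show "\<And>l. 0 \<le> (if l < K then c l else 0)" using c0 by simp
    show "(if l < K then c l else 0) = 0" if "min n m \<le> l" for l
    proof -
      have "K \<le> l" using K that by linarith
      then show ?thesis by simp
    qed
    show "\<And>l l'. l \<le> l' \<Longrightarrow> (if l' < K then c l' else 0) \<le> (if l < K then c l else 0)"
      using cd c0 by auto
    show "\<exists>U V. unitary_fun n U \<and> unitary_fun m V \<and> (\<forall>i<n. \<forall>j<m. dg K c i j =
        (\<Sum>l<min n m. U i l * complex_of_real (if l < K then c l else 0) * cnj (V j l)))"
      using uI dec by blast
  qed
qed

lemma dg_unit:
  assumes K: "K \<le> min n m" and c0: "\<forall>l. 0 \<le> c l" and cd: "\<forall>l l'. l \<le> l' \<and> l' < K \<longrightarrow> c l' \<le> c l"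
    and n1: "(\<Sum>l<K. (c l)^2) = 1"
  shows "unit_vec n m (dg K c)"
  unfolding unit_vec_def
proof
  show "supported_vec n m (dg K c)" unfolding supported_vec_def dg_def using K by auto
  have "(\<Sum>i<n. \<Sum>j<m. (cmod (dg K c i j))^2) = (\<Sum>l<min n m. (if l < K then c l else 0)^2)"
    by (rule frob[OF dg_svals[OF assms(1-3)]])
  also have "\<dots> = (\<Sum>l<K. (c l)^2)"
    by (rule sum.mono_neutral_cong_right) (use K in auto)
  finally show "(\<Sum>i<n. \<Sum>j<m. (cmod (dg K c i j))^2) = 1" using n1 by simp
qed

lemma dg_trace: "(\<Sum>i<K. dg K c i i) = complex_of_real (\<Sum>i<K. c i)"
  unfolding dg_def by simp

lemma unit_sum: "unit_vec n m a \<Longrightarrow> (\<Sum>i<n. \<Sum>j<m. (cmod (a i j))^2) = 1"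
  unfolding unit_vec_def by simp

lemma Vk_bound:
  assumes K: "k + 1 \<le> min n m" and a: "a \<in> Vset n m (real k)"
  shows "(cmod (\<Sum>i<k+1. a i i))^2 \<le> real k"
proof -
  obtain s where sv: "is_svals n m a s" and sch: "\<forall>j. schmidt n m a j = s (j - 1)"
    using schmidt_ex by blast
  have ad: "unit_vec n m a" "\<forall>j. k + 1 \<le> j \<longrightarrow> schmidt n m a j = 0"
    using a unfolding Vset_def adm_int by auto
  have sz: "s l = 0" if "k \<le> l" for l
    using ad(2) sch that by (metis add_diff_cancel_right' add_le_mono1)
  have s0: "\<forall>l. 0 \<le> s l" using sv unfolding is_svals_def by blast
  have "cmod (\<Sum>i<k+1. a i i) \<le> (\<Sum>l<min n m. s l)"
    by (rule trace_bound[OF sv]) (use K in auto)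
  also have "(\<Sum>l<min n m. s l) = (\<Sum>l<k. s l)"
    by (rule sum.mono_neutral_right) (use K sz in auto)
  finally have t1: "cmod (\<Sum>i<k+1. a i i) \<le> (\<Sum>l<k. s l)" .
  have "(\<Sum>l<min n m. (s l)^2) = 1" using frob[OF sv] unit_sum[OF ad(1)] by simp
  moreover have "(\<Sum>l<min n m. (s l)^2) = (\<Sum>l<k. (s l)^2)"
    by (rule sum.mono_neutral_right) (use K sz in auto)
  ultimately have q1: "(\<Sum>l<k. (s l)^2) = 1" by simp
  have "(\<Sum>l<k. s l)^2 \<le> (\<Sum>l<k. (s l)^2) * real (card {..<k})"
    by (rule sum_squared_le_sum_of_squares)
  then have t2: "(\<Sum>l<k. s l)^2 \<le> real k" using q1 by simp
  have "(cmod (\<Sum>i<k+1. a i i))^2 \<le> (\<Sum>l<k. s l)^2"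
    by (rule power_mono[OF t1]) simp
  then show ?thesis using t2 by simp
qed

lemma Va_bound:
  assumes k1: "1 \<le> k" and K: "k + 1 \<le> min n m" and th: "0 < \<theta>" "\<theta> < 1"
    and a: "a \<in> Vset n m (real k + \<theta>)"
  shows "(cmod (\<Sum>i<k+1. a i i))^2 \<le> (real k + \<theta>)^2 / (real k + \<theta>^2)"
proof -
  obtain s where sv: "is_svals n m a s" and sch: "\<forall>j. schmidt n m a j = s (j - 1)"
    using schmidt_ex by blast
  have ad: "unit_vec n m a" "\<forall>j. k + 2 \<le> j \<longrightarrow> schmidt n m a j = 0"
    "schmidt n m a (k + 1) \<le> \<theta> / real k * (\<Sum>j=1..k. schmidt n m a j)"
    using a unfolding Vset_def adm_frac[OF th] by auto
  have sz: "s l = 0" if "k + 1 \<le> l" for l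
  proof -
    have "schmidt n m a (l + 1) = 0" using ad(2) that by simp
    then show ?thesis using sch by simp
  qed
  have s0: "\<forall>l. 0 \<le> s l" using sv unfolding is_svals_def by blast
  have sumeq: "(\<Sum>j=1..k. schmidt n m a j) = (\<Sum>l<k. s l)"
    unfolding One_nat_def sum.atLeast1_atMost_eq using sch by simp
  have tS: "s k \<le> \<theta> / real k * (\<Sum>l<k. s l)" using ad(3) sch sumeq by simp
  have "cmod (\<Sum>i<k+1. a i i) \<le> (\<Sum>l<min n m. s l)"
    by (rule trace_bound[OF sv]) (use K in auto)
  also have "(\<Sum>l<min n m. s l) = (\<Sum>l<k+1. s l)"
    by (rule sum.mono_neutral_right) (use K sz in auto)
  also have "\<dots> = (\<Sum>l<k. s l) + s k" by simp
  finally have t1: "cmod (\<Sum>i<k+1. a i i) \<le> (\<Sum>l<k. s l) + s k" .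
  have "(\<Sum>l<min n m. (s l)^2) = 1" using frob[OF sv] unit_sum[OF ad(1)] by simp
  moreover have "(\<Sum>l<min n m. (s l)^2) = (\<Sum>l<k+1. (s l)^2)"
    by (rule sum.mono_neutral_right) (use K sz in auto)
  ultimately have q1: "(\<Sum>l<k. (s l)^2) + (s k)^2 = 1" by simp
  have "(\<Sum>l<k. s l)^2 \<le> (\<Sum>l<k. (s l)^2) * real (card {..<k})"
    by (rule sum_squared_le_sum_of_squares)
  then have SQ: "(\<Sum>l<k. s l)^2 \<le> real k * (\<Sum>l<k. (s l)^2)" by (simp add: mult.commute)
  have b: "((\<Sum>l<k. s l) + s k)^2 \<le> (real k + \<theta>)^2 / (real k + \<theta>^2)"
    by (rule alg_bound[OF _ th _ _ tS SQ q1]) (use k1 s0 in \<open>auto intro: sum_nonneg\<close>)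
  have "(cmod (\<Sum>i<k+1. a i i))^2 \<le> ((\<Sum>l<k. s l) + s k)^2"
    by (rule power_mono[OF t1]) simp
  then show ?thesis using b by simp
qed

lemma cone_mono: "S \<subseteq> T \<Longrightarrow> cvx_cone_gen S \<subseteq> cvx_cone_gen T"
proof
  fix X assume ST: "S \<subseteq> T" and X: "X \<in> cvx_cone_gen S"
  then obtain N :: nat and c v where cv: "\<forall>i<N. 0 \<le> c i \<and> v i \<in> S"
    and Xe: "X = (\<lambda>x y. \<Sum>i<N. complex_of_real (c i) * v i x y)"
    unfolding cvx_cone_gen_def by auto
  have "\<forall>i<N. 0 \<le> c i \<and> v i \<in> T" using cv ST by auto
  then show "X \<in> cvx_cone_gen T" unfolding cvx_cone_gen_def using Xe by auto
qed

lemma K_mono: "Vset n m \<beta> \<subseteq> Vset n m \<gamma> \<Longrightarrow> Kset n m \<beta> \<subseteq> Kset n m \<gamma>"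
  unfolding Kset_def by (intro closure_mono cone_mono image_mono)

lemma BP_mono: "Vset n m \<beta> \<subseteq> Vset n m \<gamma> \<Longrightarrow> BPset n m \<gamma> \<subseteq> BPset n m \<beta>"
  unfolding BPset_def by blast

lemma K_strict:
  assumes "a \<in> Vset n m \<gamma>" "\<forall>b\<in>Vset n m \<beta>. 0 \<le> Re (qform n m W b)" "Re (qform n m W a) < 0"
  shows "rank1_op a \<in> Kset n m \<gamma>" "rank1_op a \<notin> Kset n m \<beta>"
proof -
  show "rank1_op a \<in> Kset n m \<gamma>" by (rule rank1_in_K[OF assms(1)])
  show "rank1_op a \<notin> Kset n m \<beta>"
  proof
    assume "rank1_op a \<in> Kset n m \<beta>"
    from Kset_Lf[OF assms(2) this] assms(3) show False by (simp add: Lf_rank1)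
  qed
qed

theorem proposition3p7:
  fixes n m k :: nat and \<theta> :: real
  assumes "1 \<le> k" and "k \<le> min n m - 1" and "0 < \<theta>" and "\<theta> < 1"
  shows "(Vset n m (real k) \<subset> Vset n m (real k + \<theta>) \<and>
         Vset n m (real k + \<theta>) \<subset> Vset n m (real k + 1)) \<and>
         (Kset n m (real k) \<subset> Kset n m (real k + \<theta>) \<and>
         Kset n m (real k + \<theta>) \<subset> Kset n m (real k + 1)) \<and>
         (BPset n m (real k) \<supset> BPset n m (real k + \<theta>) \<and>
         BPset n m (real k + \<theta>) \<supset> BPset n m (real k + 1))"
proof -
  have k1: "1 \<le> k" by (rule assms(1))
  have K: "k + 1 \<le> min n m" using assms(1,2) by linarith
  have th: "0 < \<theta>" "\<theta> < 1" by (rule assms(3), rule assms(4))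
  have Kn: "k + 1 \<le> n" "k + 1 \<le> m" using K by auto
  have kpos: "real k > 0" using k1 by simp
  define c2 where "c2 = (real k + \<theta>)^2 / (real k + \<theta>^2)"
  define W1 where "W1 = wit n m (k+1) (real k)"
  define W2 where "W2 = wit n m (k+1) c2"
  have qW1: "Re (qform n m W1 a) = real k * (\<Sum>i<n. \<Sum>j<m. (cmod (a i j))^2) - (cmod (\<Sum>i<k+1. a i i))^2" for a
    unfolding W1_def by (rule qform_wit[OF Kn])
  have qW2: "Re (qform n m W2 a) = c2 * (\<Sum>i<n. \<Sum>j<m. (cmod (a i j))^2) - (cmod (\<Sum>i<k+1. a i i))^2" for a
    unfolding W2_def by (rule qform_wit[OF Kn])
  define x1 where "x1 = 1 / sqrt (real k + \<theta>^2)"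
  have kt2: "real k + \<theta>^2 > 0" using kpos by (simp add: add_pos_nonneg)
  have x1p: "x1 > 0" unfolding x1_def using kt2 by simp
  have x1sq: "x1^2 * (real k + \<theta>^2) = 1" unfolding x1_def using kt2 by (simp add: power_divide)
  define c1 where "c1 = (\<lambda>l. if l < k then x1 else \<theta> * x1)"
  define a1 where "a1 = dg (k+1) c1"
  have c1n: "\<forall>l. 0 \<le> c1 l" unfolding c1_def using x1p th by auto
  have c1d: "\<forall>l l'. l \<le> l' \<and> l' < k + 1 \<longrightarrow> c1 l' \<le> c1 l"
    unfolding c1_def using x1p th by (auto simp: mult_le_cancel_right1)
  have sumc1: "(\<Sum>l<k. c1 l) = real k * x1" unfolding c1_def by simp
  have c1sq: "(\<Sum>l<k+1. (c1 l)^2) = 1"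
  proof -
    have "(\<Sum>l<k+1. (c1 l)^2) = (\<Sum>l<k. (c1 l)^2) + (c1 k)^2" by simp
    also have "(\<Sum>l<k. (c1 l)^2) = real k * x1^2" unfolding c1_def by simp
    also have "(c1 k)^2 = \<theta>^2 * x1^2" unfolding c1_def by (simp add: power_mult_distrib)
    finally show ?thesis using x1sq by (simp add: algebra_simps)
  qed
  have u1: "unit_vec n m a1" unfolding a1_def by (rule dg_unit[OF K c1n c1d c1sq])
  have sch1: "schmidt n m a1 j = (if j - 1 < k + 1 then c1 (j - 1) else 0)" for j
    unfolding a1_def using schmidt_eq[OF dg_svals[OF K c1n c1d]] by simp
  have sum1: "(\<Sum>j=1..k. schmidt n m a1 j) = real k * x1"
    unfolding One_nat_def sum.atLeast1_atMost_eq sch1 using sumc1 by simp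
  have a1V: "a1 \<in> Vset n m (real k + \<theta>)"
    unfolding Vset_def mem_Collect_eq adm_frac[OF th]
  proof (intro conjI allI impI)
    show "unit_vec n m a1" by (rule u1)
    show "schmidt n m a1 j = 0" if "k + 2 \<le> j" for j using that by (simp add: sch1)
    show "schmidt n m a1 (k + 1) \<le> \<theta> / real k * (\<Sum>j=1..k. schmidt n m a1 j)"
      unfolding sum1 using kpos by (simp add: sch1 c1_def)
  qed
  have a1nV: "a1 \<notin> Vset n m (real k)"
  proof
    assume "a1 \<in> Vset n m (real k)"
    then have "schmidt n m a1 (k + 1) = 0" unfolding Vset_def adm_int by auto
    then show False using sch1[of "k+1"] th x1p by (simp add: c1_def)
  qed
  have T1: "(\<Sum>i<k+1. a1 i i) = complex_of_real (real k * x1 + \<theta> * x1)"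
    unfolding a1_def dg_trace using sumc1 by (simp add: c1_def)
  have q1: "Re (qform n m W1 a1) < 0"
  proof -
    have "Re (qform n m W1 a1) = real k - (real k * x1 + \<theta> * x1)^2"
      unfolding qW1 unit_sum[OF u1] T1 norm_of_real by simp
    also have "(real k * x1 + \<theta> * x1)^2 = (real k + \<theta>)^2 * x1^2" by (simp add: algebra_simps power2_eq_square)
    finally have e: "Re (qform n m W1 a1) = real k - (real k + \<theta>)^2 * x1^2" .
    have "\<theta>^2 < \<theta>" using th by (simp add: power2_eq_square)
    then have "real k * \<theta>^2 < real k * \<theta>" using kpos by simp
    moreover have "0 < \<theta>^2" using th by simp
    moreover have "0 < real k * \<theta>" using th kpos by simp
    moreover have "(real k + \<theta>)^2 - real k * (real k + \<theta>^2) = \<theta>^2 + 2 * (real k * \<theta>) - real k * \<theta>^2"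
      by (simp add: power2_eq_square algebra_simps)
    ultimately have "real k * (real k + \<theta>^2) < (real k + \<theta>)^2" by linarith
    then have "real k * (real k + \<theta>^2) * x1^2 < (real k + \<theta>)^2 * x1^2" using x1p by simp
    then have "real k < (real k + \<theta>)^2 * x1^2" using x1sq by (simp add: mult_ac)
    then show ?thesis using e by simp
  qed
  define x2 where "x2 = 1 / sqrt (real k + 1)"
  have x2p: "x2 > 0" unfolding x2_def by simp
  have x2sq: "x2^2 * (real k + 1) = 1" unfolding x2_def by (simp add: power_divide)
  define a2 where "a2 = dg (k+1) (\<lambda>_. x2)"
  have c2n: "\<forall>l. 0 \<le> (\<lambda>_. x2) l" using x2p by simp
  have c2d: "\<forall>l l'. l \<le> l' \<and> l' < k + 1 \<longrightarrow> (\<lambda>_. x2) l' \<le> (\<lambda>_. x2) l" by simp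
  have c2sq: "(\<Sum>l<k+1. ((\<lambda>_. x2) l)^2) = 1" using x2sq by (simp add: mult.commute add.commute)
  have u2: "unit_vec n m a2" unfolding a2_def by (rule dg_unit[OF K c2n c2d c2sq])
  have sch2: "schmidt n m a2 j = (if j - 1 < k + 1 then x2 else 0)" for j
    unfolding a2_def using schmidt_eq[OF dg_svals[OF K c2n c2d]] by simp
  have sum2: "(\<Sum>j=1..k. schmidt n m a2 j) = real k * x2"
    unfolding One_nat_def sum.atLeast1_atMost_eq sch2 by simp
  have a2V: "a2 \<in> Vset n m (real k + 1)"
    unfolding Vset_def mem_Collect_eq adm_int1
    using u2 by (simp add: sch2) arith
  have a2nV: "a2 \<notin> Vset n m (real k + \<theta>)"
  proof
    assume "a2 \<in> Vset n m (real k + \<theta>)"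
    then have "schmidt n m a2 (k + 1) \<le> \<theta> / real k * (\<Sum>j=1..k. schmidt n m a2 j)"
      unfolding Vset_def adm_frac[OF th] by auto
    then have "x2 \<le> \<theta> * x2" unfolding sum2 using kpos by (simp add: sch2)
    then show False using th x2p by simp
  qed
  have T2: "(\<Sum>i<k+1. a2 i i) = complex_of_real ((real k + 1) * x2)"
    unfolding a2_def dg_trace by simp
  have c2lt: "c2 < real k + 1"
  proof -
    have "0 < real k * (1 - \<theta>)^2" using kpos th by simp
    then have "(real k + \<theta>)^2 < (real k + 1) * (real k + \<theta>^2)"
      by (simp add: power2_eq_square algebra_simps)
    then show ?thesis unfolding c2_def using kt2 by (simp add: divide_less_eq)
  qed
  have q2: "Re (qform n m W2 a2) < 0"
  proof -
    have "Re (qform n m W2 a2) = c2 - ((real k + 1) * x2)^2"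
      unfolding qW2 unit_sum[OF u2] T2 norm_of_real using x2p by simp
    also have "((real k + 1) * x2)^2 = (real k + 1) * (x2^2 * (real k + 1))"
      by (simp add: power2_eq_square mult_ac)
    also have "\<dots> = real k + 1" using x2sq by simp
    finally show ?thesis using c2lt by simp
  qed
  have W1BP: "W1 \<in> BPset n m (real k)"
    unfolding BPset_def mem_Collect_eq
  proof
    show "hermitian_op n m W1" unfolding W1_def by (rule wit_herm)
    show "\<forall>a\<in>Vset n m (real k). 0 \<le> Re (qform n m W1 a)"
    proof
      fix a assume a: "a \<in> Vset n m (real k)"
      then have "unit_vec n m a" unfolding Vset_def adm_int by auto
      then show "0 \<le> Re (qform n m W1 a)" unfolding qW1 using unit_sum Vk_bound[OF K a] by simp
    qed
  qed
  have W2BP: "W2 \<in> BPset n m (real k + \<theta>)"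
    unfolding BPset_def mem_Collect_eq
  proof
    show "hermitian_op n m W2" unfolding W2_def by (rule wit_herm)
    show "\<forall>a\<in>Vset n m (real k + \<theta>). 0 \<le> Re (qform n m W2 a)"
    proof
      fix a assume a: "a \<in> Vset n m (real k + \<theta>)"
      then have "unit_vec n m a" unfolding Vset_def adm_frac[OF th] by auto
      then show "0 \<le> Re (qform n m W2 a)" unfolding qW2 c2_def using unit_sum Va_bound[OF k1 K th a] by simp
    qed
  qed
  have W1nBP: "W1 \<notin> BPset n m (real k + \<theta>)" using a1V q1 unfolding BPset_def by force
  have W2nBP: "W2 \<notin> BPset n m (real k + 1)" using a2V q2 unfolding BPset_def by force
  have V12: "Vset n m (real k) \<subseteq> Vset n m (real k + \<theta>)"
  proof
    fix a assume "a \<in> Vset n m (real k)"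
    then have h: "unit_vec n m a" "\<forall>j. k + 1 \<le> j \<longrightarrow> schmidt n m a j = 0"
      unfolding Vset_def adm_int by auto
    have "0 \<le> \<theta> / real k * (\<Sum>j=1..k. schmidt n m a j)"
      using th kpos by (intro mult_nonneg_nonneg sum_nonneg schmidt_nonneg) auto
    then show "a \<in> Vset n m (real k + \<theta>)"
      unfolding Vset_def mem_Collect_eq adm_frac[OF th] using h by auto
  qed
  have V23: "Vset n m (real k + \<theta>) \<subseteq> Vset n m (real k + 1)"
    unfolding Vset_def adm_frac[OF th] adm_int1 by auto
  have BP_k: "W1 \<in> BPset n m (real k) - BPset n m (real k + \<theta>)" using W1BP W1nBP by simp
  have BP_a: "W2 \<in> BPset n m (real k + \<theta>) - BPset n m (real k + 1)" using W2BP W2nBP by simp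
  have allW1: "\<forall>b\<in>Vset n m (real k). 0 \<le> Re (qform n m W1 b)" using W1BP unfolding BPset_def by simp
  have allW2: "\<forall>b\<in>Vset n m (real k + \<theta>). 0 \<le> Re (qform n m W2 b)" using W2BP unfolding BPset_def by simp
  note Ks1 = K_strict[OF a1V allW1 q1]
  note Ks2 = K_strict[OF a2V allW2 q2]
  show ?thesis
    using V12 V23 a1V a1nV a2V a2nV K_mono[OF V12] K_mono[OF V23] Ks1 Ks2
      BP_mono[OF V12] BP_mono[OF V23] BP_k BP_a
    by blast
qed

end
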